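(* Assume $\sigma_1$ consists of simple eigenvalues. There exist constants $0<C_1<C_2$ and $N\ge N_1$ such that for all $1\le m\le\ell_1$, $|k|\ge N$, and all $x_m^k\in\ker\Delta(\lambda_m^k)$, $y_m^k\in\ker\Delta^*(\overline{\lambda_m^k})$ with $\|x_m^k\|=\|y_m^k\|=1$, $C_1\le\Big|\frac{1}{\lambda_m^k}\langle\Delta'(\lambda_m^k)x_m^k,y_m^k\rangle_{\mathbb C^n}\Big|\le C_2,$ where $\Delta'=\frac{d}{d\lambda}\Delta$.
   Context: $A_{-1}\in\mathbb C^{n\times n}$, $A_2,A_3\in L_2([-1,0];\mathbb C^{n\times n})$, $\Delta(\lambda)=-\lambda I+\lambda e^{-\lambda}A_{-1}+\lambda\int_{-1}^0e^{\lambda s}A_2(s)ds+\int_{-1}^0e^{\lambda s}A_3(s)ds$, $\Delta^*(\lambda)$ the same with $A_{-1},A_2,A_3$ replaced by conjugate transposes. Spectral notation: $\mu_1,\dots,\mu_\ell$ distinct eigenvalues of $A_{-1}$ (possibly $\det A_{-1}=0$), $\sigma_1=\sigma(A_{-1})\cap\{|\mu|=1\}=\{\mu_1,\dots,\mu_{\ell_1}\}$; "$\sigma_1$ consists of simple eigenvalues" means each $\mu_m$, $m\le\ell_1$, has algebraic multiplicity $1$. $\tilde\lambda_m^k=\mathrm i(\arg\mu_m+2\pi k)$. Known: there are $N_1$ and radii $r^{(k)}$ with $\sum_k(r^{(k)})^2<\infty$ such that for $m\le\ell_1$, $|k|\ge N_1$ the disc of radius $r^{(k)}$ about $\tilde\lambda_m^k$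 contains exactly one root (with multiplicity) $\lambda_m^k$ of $\det\Delta$, which is simple, with $|\lambda_m^k-\tilde\lambda_m^k|\to0$. *)

theory Defs
  imports "HOL-Analysis.Analysis" "HOL-Computational_Algebra.Polynomial"
begin

definition L2_mat :: "(real \<Rightarrow> complex^'n^'n) \<Rightarrow> bool" where
  "L2_mat A \<longleftrightarrow> (\<forall>i j. set_borel_measurable lborel {-1..0} (\<lambda>s. A s $ i $ j) \<and>
      set_integrable lborel {-1..0} (\<lambda>s. (cmod (A s $ i $ j))^2))"

definition Delta :: "complex^'n^'n \<Rightarrow> (real \<Rightarrow> complex^'n^'n) \<Rightarrow> (real \<Rightarrow> complex^'n^'n)
    \<Rightarrow> complex \<Rightarrow> complex^'n^'n" where
  "Delta Am1 A2 A3 z = (\<chi> i j. - z * (if i = j then 1 else 0) + z * exp (- z) * Am1 $ i $ j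
      + z * (LINT s:{-1..0}|lborel. exp (z * of_real s) * A2 s $ i $ j)
      + (LINT s:{-1..0}|lborel. exp (z * of_real s) * A3 s $ i $ j))"

definition DeltaD :: "complex^'n^'n \<Rightarrow> (real \<Rightarrow> complex^'n^'n) \<Rightarrow> (real \<Rightarrow> complex^'n^'n)
    \<Rightarrow> complex \<Rightarrow> complex^'n^'n" where
  "DeltaD Am1 A2 A3 z = (\<chi> i j. deriv (\<lambda>w. Delta Am1 A2 A3 w $ i $ j) z)"

definition cadj :: "complex^'n^'n \<Rightarrow> complex^'n^'n" where
  "cadj M = (\<chi> i j. cnj (M $ j $ i))"

definition DeltaStar :: "complex^'n^'n \<Rightarrow> (real \<Rightarrow> complex^'n^'n) \<Rightarrow> (real \<Rightarrow> complex^'n^'n)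
    \<Rightarrow> complex \<Rightarrow> complex^'n^'n" where
  "DeltaStar Am1 A2 A3 = Delta (cadj Am1) (\<lambda>s. cadj (A2 s)) (\<lambda>s. cadj (A3 s))"

definition cinner :: "complex^'n \<Rightarrow> complex^'n \<Rightarrow> complex" where
  "cinner u v = (\<Sum>i\<in>UNIV. u $ i * cnj (v $ i))"

definition charpoly :: "complex^'n^'n \<Rightarrow> complex poly" where
  "charpoly A = det (\<chi> i j. (if i = j then [:0, 1:] else 0) - [:A $ i $ j:])"

definition sigma1 :: "complex^'n^'n \<Rightarrow> complex set" where
  "sigma1 A = {\<mu>. det (mat \<mu> - A) = 0 \<and> cmod \<mu> = 1}"

definition lam_tilde :: "complex \<Rightarrow> int \<Rightarrow> complex" where
  "lam_tilde \<mu> k = \<i> * of_real (Arg \<mu> + 2 * pi * of_int k)"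

end

theory Submission
  imports Defs
begin



lemma exp_sub_bound:
  fixes w :: complex
  assumes "cmod w \<le> 1"
  shows "cmod (exp w - 1 - w) \<le> (cmod w)^2"
proof -
  have s: "summable (\<lambda>n. norm (inverse (fact (n + 2)) *\<^sub>R (w ^ (n + 2))))"
    using summable_ignore_initial_segment[OF summable_norm_exp[of w], of 2] by simp
  have sr: "summable (\<lambda>n. inverse (fact (n + 2)) * (cmod w ^ (n + 2)))"
    using summable_ignore_initial_segment[OF summable_exp[of "cmod w"], of 2] by simp
  have "cmod (exp w - 1 - w) = norm (\<Sum>n. inverse (fact (n + 2)) *\<^sub>R (w ^ (n + 2)))"
    by (subst exp_first_two_terms) simp
  also have "\<dots> \<le> (\<Sum>n. norm (inverse (fact (n + 2)) *\<^sub>R (w ^ (n + 2))))"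
    by (rule summable_norm[OF s])
  also have "\<dots> \<le> (\<Sum>n. inverse (fact (n + 2)) * (cmod w ^ (n + 2)))"
    by (intro suminf_le s sr) (simp add: norm_power norm_mult)
  also have "\<dots> = exp (cmod w) - 1 - cmod w"
    by (subst exp_first_two_terms) simp
  also have "\<dots> \<le> (cmod w)^2" using exp_bound[of "cmod w"] assms by simp
  finally show ?thesis .
qed




definition rowrep :: "'a::comm_ring_1^'n^'n \<Rightarrow> 'n \<Rightarrow> 'a^'n \<Rightarrow> 'a^'n^'n" where
  "rowrep M i v = (\<chi> r. if r = i then v else M $ r)"

lemma det_rowrep:
  "det (rowrep M i v) = (\<Sum>p\<in>{p. p permutes (UNIV::'n::finite set)}.
      of_int (sign p) * (v $ p i * (\<Prod>r\<in>UNIV-{i}. M $ r $ p r)))"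
  unfolding det_def
proof (rule sum.cong[OF refl])
  fix p :: "'n \<Rightarrow> 'n"
  have "(\<Prod>r\<in>UNIV. rowrep M i v $ r $ p r) = rowrep M i v $ i $ p i * (\<Prod>r\<in>UNIV-{i}. rowrep M i v $ r $ p r)"
    by (rule prod.remove) auto
  also have "\<dots> = v $ p i * (\<Prod>r\<in>UNIV-{i}. M $ r $ p r)"
    by (auto simp: rowrep_def intro!: prod.cong)
  finally show "of_int (sign p) * (\<Prod>r\<in>UNIV. rowrep M i v $ r $ p r) =
      of_int (sign p) * (v $ p i * (\<Prod>r\<in>UNIV-{i}. M $ r $ p r))" by simp
qed

lemma ifmult_simp: "(if l = i then 1 else 0) * (a::'a::semiring_1) = (if l = i then a else 0)"
  by simp

lemma det_rowrep_lin:
  fixes M :: "'a::comm_ring_1^'n^'n"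
  shows "det (rowrep M i v) = (\<Sum>l\<in>UNIV. v $ l * det (rowrep M i (axis l 1)))"
proof -
  have "(\<Sum>l\<in>UNIV. v $ l * det (rowrep M i (axis l 1))) =
     (\<Sum>l\<in>UNIV. \<Sum>p\<in>{p. p permutes (UNIV::'n set)}. v $ l *
        (of_int (sign p) * ((axis l 1 :: 'a^'n) $ p i * (\<Prod>r\<in>UNIV-{i}. M $ r $ p r))))"
    by (simp add: det_rowrep sum_distrib_left)
  also have "\<dots> = (\<Sum>p\<in>{p. p permutes (UNIV::'n set)}. \<Sum>l\<in>UNIV. v $ l *
        (of_int (sign p) * ((axis l 1 :: 'a^'n) $ p i * (\<Prod>r\<in>UNIV-{i}. M $ r $ p r))))"
    by (rule sum.swap)
  also have "\<dots> = det (rowrep M i v)"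
    unfolding det_rowrep
  proof (rule sum.cong[OF refl])
    fix p :: "'n \<Rightarrow> 'n"
    have "(\<Sum>l\<in>UNIV. v $ l * (of_int (sign p) * ((axis l 1 :: 'a^'n) $ p i * (\<Prod>r\<in>UNIV-{i}. M $ r $ p r))))
       = (\<Sum>l\<in>UNIV. if l = p i then v $ l * (of_int (sign p) * (\<Prod>r\<in>UNIV-{i}. M $ r $ p r)) else 0)"
      by (rule sum.cong) (auto simp: axis_def)
    also have "\<dots> = v $ p i * (of_int (sign p) * (\<Prod>r\<in>UNIV-{i}. M $ r $ p r))"
      by (simp add: sum.delta')
    finally show "(\<Sum>l\<in>UNIV. v $ l * (of_int (sign p) * ((axis l 1 :: 'a^'n) $ p i * (\<Prod>r\<in>UNIV-{i}. M $ r $ p r))))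
       = of_int (sign p) * (v $ p i * (\<Prod>r\<in>UNIV-{i}. M $ r $ p r))" by (simp add: ac_simps)
  qed
  finally show ?thesis ..
qed

lemma det_deriv:
  fixes M V :: "complex^'n^'n"
  shows "((\<lambda>t. det (\<chi> r l. M$r$l + t * V$r$l)) has_field_derivative
           (\<Sum>i\<in>UNIV. det (rowrep M i (V $ i)))) (at 0)"
proof -
  have d: "((\<lambda>t. det (\<chi> r l. M$r$l + t * V$r$l)) has_field_derivative
      (\<Sum>p\<in>{p. p permutes (UNIV::'n set)}. of_int (sign p) *
         (\<Sum>r\<in>UNIV. V $ r $ p r * (\<Prod>y\<in>UNIV-{r}. M $ y $ p y + 0 * V $ y $ p y)))) (at 0)"
    unfolding det_def vec_lambda_beta
    by (intro DERIV_sum DERIV_cmult has_field_derivative_prod derivative_eq_intros) auto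
  have "(\<Sum>p\<in>{p. p permutes (UNIV::'n set)}. of_int (sign p) *
         (\<Sum>r\<in>UNIV. V $ r $ p r * (\<Prod>y\<in>UNIV-{r}. M $ y $ p y + 0 * V $ y $ p y)))
      = (\<Sum>r\<in>UNIV. \<Sum>p\<in>{p. p permutes (UNIV::'n set)}. of_int (sign p) *
         (V $ r $ p r * (\<Prod>y\<in>UNIV-{r}. M $ y $ p y)))"
    by (simp add: sum_distrib_left) (rule sum.swap)
  also have "\<dots> = (\<Sum>i\<in>UNIV. det (rowrep M i (V $ i)))"
    by (simp add: det_rowrep)
  finally show ?thesis using d by simp
qed

lemma det0_of_ker:
  fixes N :: "'a::field^'n^'n"
  assumes "N *v x = 0" "x \<noteq> 0"
  shows "det N = 0"
proof (rule ccontr)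
  assume "det N \<noteq> 0"
  then have "invertible N" by (simp add: invertible_det_nz)
  then obtain N' where "N' ** N = mat 1" unfolding invertible_def by blast
  then have "x = N' *v (N *v x)" by (simp add: matrix_vector_mul_assoc)
  with assms show False by simp
qed

lemma rowrep_mult_nth:
  "(rowrep M i v *v u) $ r = (if r = i then (\<Sum>l\<in>UNIV. v $ l * u $ l) else (M *v u) $ r)"
  by (simp add: rowrep_def matrix_vector_mult_def)

lemma ker_dim1:
  fixes M :: "complex^'n^'n"
  assumes D: "(\<Sum>i\<in>UNIV. det (rowrep M i (axis i 1))) \<noteq> 0"
    and x: "M *v x = 0" "x \<noteq> 0" and x': "M *v x' = 0"
  shows "\<exists>c. x' = c *s x"
proof (rule ccontr)
  assume nc: "\<not> (\<exists>c. x' = c *s x)"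
  have "det (rowrep M i (axis i 1)) = 0" for i
  proof (cases "x $ i = 0")
    case True
    show ?thesis
    proof (rule det0_of_ker[OF _ x(2)])
      show "rowrep M i (axis i 1) *v x = 0"
        using True x(1) by (simp add: vec_eq_iff rowrep_mult_nth axis_def ifmult_simp)
    qed
  next
    case False
    define u where "u = x' $ i *s x - x $ i *s x'"
    have "u \<noteq> 0"
    proof
      assume "u = 0"
      then have "x' = (x' $ i / x $ i) *s x" using False
        by (simp add: u_def vec_eq_iff field_simps)
      with nc show False by blast
    qed
    moreover have "rowrep M i (axis i 1) *v u = 0"
    proof -
      have "M *v u = 0" using x(1) x' by (simp add: u_def matrix_vector_mult_diff_distrib
         vector_scalar_commute)
      moreover have "(\<Sum>l\<in>UNIV. (axis i 1 :: complex^'n) $ l * u $ l) = 0"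
        by (simp add: axis_def ifmult_simp u_def)
      ultimately show ?thesis unfolding vec_eq_iff rowrep_mult_nth by auto
    qed
    ultimately show ?thesis using det0_of_ker by blast
  qed
  with D show False by simp
qed

lemma axis_sum: "(\<Sum>l\<in>UNIV. (axis j 1 :: 'a::comm_ring_1^'n) $ l * f l) = f j"
proof -
  have "(\<Sum>l\<in>UNIV. (axis j 1 :: 'a::comm_ring_1^'n) $ l * f l) = (\<Sum>l\<in>UNIV. if l = j then f l else 0)"
    by (rule sum.cong) (auto simp: axis_def)
  also have "\<dots> = f j" by simp
  finally show ?thesis .
qed

lemma axis_comb_sum:
  "(\<Sum>l'\<in>UNIV. (axis l 1 - c *s axis j 1 :: 'a::comm_ring_1^'n) $ l' * f l') = f l - c * f j"
proof -
  have "(\<Sum>l'\<in>UNIV. (axis l 1 - c *s axis j 1 :: 'a::comm_ring_1^'n) $ l' * f l')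
     = (\<Sum>l'\<in>UNIV. (axis l 1 :: 'a^'n) $ l' * f l' - c * ((axis j 1 :: 'a^'n) $ l' * f l'))"
    by (simp add: algebra_simps)
  also have "\<dots> = f l - c * f j"
    by (simp add: sum_subtractf sum_distrib_left[symmetric] axis_sum)
  finally show ?thesis .
qed

lemma colsum_zero:
  fixes M :: "complex^'n^'n"
  assumes "det M = 0"
  shows "(\<Sum>i\<in>UNIV. M$i$k * det (rowrep M i (axis j 1))) = 0"
proof -
  define V :: "complex^'n^'n" where "V = (\<chi> r l. if l = j then M$r$k else 0)"
  have const: "det (\<chi> r l. M$r$l + t * V$r$l) = 0" for t
  proof -
    let ?K = "(\<chi> r l. M$r$l + t * V$r$l) :: complex^'n^'n"
    have "det ?K = det (transpose ?K)" by simp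
    also have "\<dots> = 0"
    proof (cases "k = j")
      case True
      have "transpose ?K = (\<chi> r. if r = j then (1 + t) *s row j (transpose M) else row r (transpose M))"
        using True by (simp add: vec_eq_iff transpose_def row_def V_def algebra_simps)
      then have "det (transpose ?K) = (1 + t) * det (\<chi> r. if r = j then row j (transpose M) else row r (transpose M))"
        by (simp add: det_row_mul)
      also have "(\<chi> r. if r = j then row j (transpose M) else row r (transpose M)) = transpose M"
        by (simp add: vec_eq_iff row_def)
      finally show ?thesis using assms by simp
    next
      case False
      have "transpose ?K = (\<chi> r. if r = j then row j (transpose M) + t *s row k (transpose M) else row r (transpose M))"
        using False by (simp add: vec_eq_iff transpose_def row_def V_def algebra_simps)
      then have "det (transpose ?K) = det (transpose M)"
        using det_row_operation[of j k "transpose M" t] False by simp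
      then show ?thesis using assms by simp
    qed
    finally show ?thesis .
  qed
  have d0: "((\<lambda>t. det (\<chi> r l. M$r$l + t * V$r$l)) has_field_derivative 0) (at 0)"
    unfolding const by simp
  have "(\<Sum>i\<in>UNIV. det (rowrep M i (V $ i))) = 0"
    using DERIV_unique[OF det_deriv d0] .
  moreover have "det (rowrep M i (V $ i)) = M$i$k * det (rowrep M i (axis j 1))" for i
  proof -
    have "V $ i = M$i$k *s axis j 1" by (simp add: V_def vec_eq_iff axis_def)
    then show ?thesis
      by (subst det_rowrep_lin) (simp add: mult.assoc sum_distrib_left[symmetric] axis_sum)
  qed
  ultimately show ?thesis by simp
qed

lemma left_right_nonorth:
  fixes M :: "complex^'n^'n"
  assumes D: "(\<Sum>i\<in>UNIV. det (rowrep M i (axis i 1))) \<noteq> 0"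
    and DT: "(\<Sum>i\<in>UNIV. det (rowrep (transpose M) i (axis i 1))) \<noteq> 0"
    and dM: "det M = 0" and x: "M *v x = 0" "x \<noteq> 0"
    and w: "transpose M *v w = 0" "w \<noteq> 0"
  shows "(\<Sum>i\<in>UNIV. w$i * x$i) \<noteq> 0"
proof
  assume wx: "(\<Sum>i\<in>UNIV. w$i * x$i) = 0"
  obtain j0 where j0: "x $ j0 \<noteq> 0" using x(2) by (auto simp: vec_eq_iff)
  define C where "C i l = det (rowrep M i (axis l 1))" for i l
  have Cx: "C i l = x$l / x$j0 * C i j0" for i l
  proof -
    define v :: "complex^'n" where "v = axis l 1 - (x$l/x$j0) *s axis j0 1"
    have sv: "(\<Sum>l'\<in>UNIV. v $ l' * x $ l') = 0"
      using j0 unfolding v_def axis_comb_sum by simp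
    have "rowrep M i v *v x = 0"
      using sv x(1) by (simp add: vec_eq_iff rowrep_mult_nth)
    then have "det (rowrep M i v) = 0" using det0_of_ker x(2) by blast
    moreover have "det (rowrep M i v) = C i l - x$l / x$j0 * C i j0"
    proof -
      have "det (rowrep M i v) = (\<Sum>l'\<in>UNIV. v$l' * C i l')"
        unfolding C_def by (rule det_rowrep_lin)
      also have "\<dots> = C i l - x$l / x$j0 * C i j0"
        unfolding v_def by (rule axis_comb_sum)
      finally show ?thesis .
    qed
    ultimately show ?thesis by simp
  qed
  define \<alpha> :: "complex^'n" where "\<alpha> = (\<chi> i. C i j0 / x$j0)"
  have "transpose M *v \<alpha> = 0"
  proof -
    have "(\<Sum>i\<in>UNIV. M$i$k * C i j0) = 0" for k
      unfolding C_def by (rule colsum_zero[OF dM])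
    then have "(\<Sum>i\<in>UNIV. M$i$k * (C i j0 / x$j0)) = 0" for k
      by (simp add: sum_divide_distrib[symmetric] times_divide_eq_right)
    then show ?thesis by (simp add: vec_eq_iff transpose_def matrix_vector_mult_def \<alpha>_def)
  qed
  then obtain c where c: "\<alpha> = c *s w" using ker_dim1[OF DT w(1) w(2)] by blast
  have "(\<Sum>i\<in>UNIV. det (rowrep M i (axis i 1))) = (\<Sum>i\<in>UNIV. \<alpha>$i * x$i)"
  proof (rule sum.cong[OF refl])
    fix i
    have "det (rowrep M i (axis i 1)) = C i i" by (simp add: C_def)
    also have "\<dots> = x$i / x$j0 * C i j0" by (rule Cx)
    also have "\<dots> = \<alpha>$i * x$i" by (simp add: \<alpha>_def)
    finally show "det (rowrep M i (axis i 1)) = \<alpha>$i * x$i" .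
  qed
  also have "\<dots> = c * (\<Sum>i\<in>UNIV. w$i * x$i)"
    by (simp add: c sum_distrib_left mult.assoc)
  finally show False using wx D by simp
qed




lemma ker_of_det0:
  fixes N :: "'a::field^'n^'n"
  assumes "det N = 0"
  shows "\<exists>x. x \<noteq> 0 \<and> N *v x = 0"
proof (rule ccontr)
  assume "\<not> ?thesis"
  then have "\<forall>x. N *v x = 0 \<longrightarrow> x = 0" by blast
  then have "\<exists>B. B ** N = mat 1" by (simp only: matrix_left_invertible_ker)
  then obtain B where "B ** N = mat 1" by (elim exE)
  then have "N ** B = mat 1" by (rule matrix_left_right_inverse1)
  with \<open>B ** N = mat 1\<close> have "invertible N" unfolding invertible_def by blast
  with assms show False by (simp add: invertible_det_nz)
qed

lemma poly_det:
  fixes P :: "'a::comm_ring_1 poly^'n^'n"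
  shows "poly (det P) z = det (\<chi> i j. poly (P$i$j) z)"
  unfolding det_def by (simp add: poly_sum poly_prod)

lemma poly_charpoly: "poly (charpoly A) z = det (mat z - A)"
  unfolding charpoly_def poly_det
  by (rule arg_cong[where f=det]) (simp add: vec_eq_iff mat_def)

lemma mat_mult_nth: "((mat c :: 'a::comm_ring_1^'n^'n) *v x) $ i = c * x $ i"
proof -
  have "((mat c :: 'a::comm_ring_1^'n^'n) *v x) $ i = (\<Sum>j\<in>UNIV. if i = j then c * x$j else 0)"
    unfolding matrix_vector_mult_def mat_def vec_lambda_beta by (rule sum.cong) auto
  also have "\<dots> = c * x $ i" by simp
  finally show ?thesis .
qed

lemma det_big_nz:
  fixes A :: "complex^'n^'n"
  shows "det (mat (of_real (1 + (\<Sum>i\<in>UNIV. \<Sum>j\<in>UNIV. cmod (A$i$j)))) - A) \<noteq> 0"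
proof
  define S where "S = (\<Sum>i\<in>UNIV. \<Sum>j\<in>UNIV. cmod (A$i$j))"
  assume "det (mat (of_real (1 + (\<Sum>i\<in>UNIV. \<Sum>j\<in>UNIV. cmod (A$i$j)))) - A) = 0"
  then obtain x where x: "x \<noteq> 0" "(mat (of_real (1 + S)) - A) *v x = 0"
    using ker_of_det0 unfolding S_def by blast
  define m where "m = Max (range (\<lambda>j. cmod (x$j)))"
  have "m \<in> range (\<lambda>j. cmod (x$j))" unfolding m_def by (rule Max_in) auto
  then obtain i where i: "cmod (x$i) = m" by auto
  have mj: "cmod (x$j) \<le> m" for j unfolding m_def by (rule Max_ge) auto
  obtain j0 where "x$j0 \<noteq> 0" using x(1) by (auto simp: vec_eq_iff)
  then have mpos: "m > 0" using mj[of j0] by (meson less_le_trans zero_less_norm_iff)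
  have "((mat (of_real (1 + S)) - A) *v x) $ i = 0" using x(2) by simp
  then have eq: "of_real (1 + S) * x$i = (\<Sum>j\<in>UNIV. A$i$j * x$j)"
    by (simp add: matrix_vector_mult_diff_rdistrib mat_mult_nth) (simp add: matrix_vector_mult_def)
  have "(1 + S) * m = cmod (of_real (1 + S) * x$i)"
  proof -
    have "S \<ge> 0" unfolding S_def by (intro sum_nonneg) auto
    then show ?thesis by (simp only: norm_mult norm_of_real i)
  qed
  also have "\<dots> \<le> (\<Sum>j\<in>UNIV. cmod (A$i$j) * cmod (x$j))"
    unfolding eq by (rule order.trans[OF norm_sum]) (simp add: norm_mult)
  also have "\<dots> \<le> (\<Sum>j\<in>UNIV. cmod (A$i$j) * m)"
    by (intro sum_mono mult_left_mono mj) auto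
  also have "\<dots> = (\<Sum>j\<in>UNIV. cmod (A$i$j)) * m" by (simp add: sum_distrib_right)
  also have "\<dots> \<le> S * m"
    unfolding S_def using mpos
    by (intro mult_right_mono member_le_sum) (auto intro: sum_nonneg)
  finally have "(1 + S) * m \<le> S * m" .
  then show False using mpos by (simp add: distrib_right)
qed

lemma charpoly_nz: "charpoly (A::complex^'n^'n) \<noteq> 0"
  using det_big_nz[of A] poly_charpoly[of A] by (metis poly_0)

lemma mat1_axis: "(mat 1 :: 'a::comm_ring_1^'n^'n) $ i = axis i 1"
  by (simp add: vec_eq_iff mat_def axis_def)

lemma simple_D:
  fixes A :: "complex^'n^'n"
  assumes root: "det (mat \<mu> - A) = 0" and ord: "order \<mu> (charpoly A) = 1"
  shows "(\<Sum>i\<in>UNIV. det (rowrep (mat \<mu> - A) i (axis i 1))) \<noteq> 0"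
    and "(\<Sum>i\<in>UNIV. det (rowrep (transpose (mat \<mu> - A)) i (axis i 1))) \<noteq> 0"
proof -
  let ?p = "charpoly A"
  have pnz: "?p \<noteq> 0" by (rule charpoly_nz)
  have r: "poly ?p \<mu> = 0" using root by (simp add: poly_charpoly)
  have "order \<mu> ?p = Suc (order \<mu> (pderiv ?p))" by (rule order_pderiv[OF pnz r])
  with ord have o0: "order \<mu> (pderiv ?p) = 0" by simp
  have dnz: "poly (pderiv ?p) \<mu> \<noteq> 0"
  proof
    assume "poly (pderiv ?p) \<mu> = 0"
    with o0 have "pderiv ?p = 0" using order_root by blast
    then obtain h where "?p = [:h:]" using pderiv_iszero by blast
    with r pnz show False by simp
  qed
  have d1: "((\<lambda>t. poly ?p (t + \<mu>)) has_field_derivative poly (pderiv ?p) \<mu>) (at 0)"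
    using poly_DERIV[of ?p "0 + \<mu>"] unfolding DERIV_shift by simp
  have e1: "poly ?p (t + \<mu>) = det (\<chi> r l. (mat \<mu> - A)$r$l + t * (mat 1 :: complex^'n^'n)$r$l)" for t
    unfolding poly_charpoly by (rule arg_cong[where f=det]) (simp add: vec_eq_iff mat_def)
  have e2: "poly ?p (t + \<mu>) = det (\<chi> r l. (transpose (mat \<mu> - A))$r$l + t * (mat 1 :: complex^'n^'n)$r$l)" for t
  proof -
    have "poly ?p (t + \<mu>) = det (transpose (mat (t + \<mu>) - A))" by (simp add: poly_charpoly)
    also have "transpose (mat (t + \<mu>) - A) = (\<chi> r l. (transpose (mat \<mu> - A))$r$l + t * (mat 1 :: complex^'n^'n)$r$l)"
      by (simp add: vec_eq_iff mat_def transpose_def)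
    finally show ?thesis .
  qed
  have "(\<Sum>i\<in>UNIV. det (rowrep (mat \<mu> - A) i ((mat 1 :: complex^'n^'n) $ i))) = poly (pderiv ?p) \<mu>"
    using DERIV_unique[OF det_deriv d1[unfolded e1]] .
  then show "(\<Sum>i\<in>UNIV. det (rowrep (mat \<mu> - A) i (axis i 1))) \<noteq> 0"
    using dnz by (simp add: mat1_axis)
  have "(\<Sum>i\<in>UNIV. det (rowrep (transpose (mat \<mu> - A)) i ((mat 1 :: complex^'n^'n) $ i))) = poly (pderiv ?p) \<mu>"
    using DERIV_unique[OF det_deriv d1[unfolded e2]] .
  then show "(\<Sum>i\<in>UNIV. det (rowrep (transpose (mat \<mu> - A)) i (axis i 1))) \<noteq> 0"
    using dnz by (simp add: mat1_axis)
qed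




definition L2f :: "(real \<Rightarrow> complex) \<Rightarrow> bool" where
  "L2f f \<longleftrightarrow> f \<in> borel_measurable borel \<and> set_integrable lborel {-1..0::real} (\<lambda>s. (cmod (f s))^2)"

definition Jint :: "(real \<Rightarrow> complex) \<Rightarrow> (real \<Rightarrow> complex) \<Rightarrow> complex" where
  "Jint \<phi> f = (LINT s:{-1..0::real}|lborel. \<phi> s * f s)"

lemma le_1_plus_sq: "(r::real) \<le> 1 + r^2"
proof (cases "r \<le> 1")
  case True then show ?thesis by (smt (verit) zero_le_power2)
next
  case False
  then have "r * 1 \<le> r * r" by (intro mult_left_mono) auto
  then show ?thesis by (simp add: power2_eq_square)
qed

lemma setmeas: "f \<in> borel_measurable borel \<Longrightarrow> set_borel_measurable lborel {-1..0::real} f" for f :: "real \<Rightarrow> complex"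
  unfolding set_borel_measurable_def by (simp add: borel_measurable_scaleR)

lemma L2f_int:
  assumes "L2f f" shows "set_integrable lborel {-1..0::real} f"
proof (rule set_integrable_bound[where f="\<lambda>s. 1 + (cmod (f s))^2"])
  have "set_integrable lborel {-1..0::real} (\<lambda>s. 1::real)"
    by (rule borel_integrable_atLeastAtMost') simp
  then show "set_integrable lborel {-1..0::real} (\<lambda>s. 1 + (cmod (f s))^2)"
    using assms unfolding L2f_def by (intro set_integral_add) auto
  show "set_borel_measurable lborel {-1..0} f" using assms unfolding L2f_def by (intro setmeas) auto
  show "AE x in lborel. x \<in> {-1..0} \<longrightarrow> norm (f x) \<le> norm (1 + (cmod (f x))\<^sup>2)"
    using le_1_plus_sq by (intro AE_I2) (simp add: abs_of_nonneg add_nonneg_nonneg)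
qed

lemma cont_bound:
  fixes \<phi> :: "real \<Rightarrow> complex"
  assumes "continuous_on UNIV \<phi>"
  obtains B where "B > 0" "\<And>s. s \<in> {-1..0} \<Longrightarrow> cmod (\<phi> s) \<le> B"
proof -
  have "compact (\<phi> ` {-1..0})"
    by (rule compact_continuous_image) (auto intro: continuous_on_subset[OF assms])
  then have "bounded (\<phi> ` {-1..0})" by (rule compact_imp_bounded)
  then obtain B where "B > 0" "\<forall>x\<in>\<phi> ` {-1..0}. norm x \<le> B" by (auto simp: bounded_pos)
  then show ?thesis using that by auto
qed

lemma J_int:
  fixes \<phi> f :: "real \<Rightarrow> complex"
  assumes f: "set_integrable lborel {-1..0::real} f" "f \<in> borel_measurable borel"
    and \<phi>: "continuous_on UNIV \<phi>"
  shows "set_integrable lborel {-1..0::real} (\<lambda>s. \<phi> s * f s)"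
proof -
  obtain B where B: "B > 0" "\<And>s. s \<in> {-1..0} \<Longrightarrow> cmod (\<phi> s) \<le> B" using cont_bound[OF \<phi>] by blast
  have [measurable]: "\<phi> \<in> borel_measurable borel" using \<phi> by (rule borel_measurable_continuous_onI)
  have [measurable]: "f \<in> borel_measurable borel" using f by simp
  show ?thesis
  proof (rule set_integrable_bound[where f="\<lambda>s. complex_of_real B * f s"])
    show "set_integrable lborel {-1..0::real} (\<lambda>s. complex_of_real B * f s)"
      using f by (intro set_integrable_mult_right) auto
    show "set_borel_measurable lborel {-1..0} (\<lambda>s. \<phi> s * f s)" by (intro setmeas) measurable
    show "AE x in lborel. x \<in> {-1..0} \<longrightarrow> norm (\<phi> x * f x) \<le> norm (complex_of_real B * f x)"
      using B by (intro AE_I2) (auto simp: norm_mult intro!: mult_right_mono)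
  qed
qed

lemma J_bound:
  assumes f: "set_integrable lborel {-1..0::real} f" "f \<in> borel_measurable borel"
    and \<phi>: "continuous_on UNIV \<phi>" and B: "\<And>s. s \<in> {-1..0} \<Longrightarrow> cmod (\<phi> s) \<le> B"
  shows "cmod (Jint \<phi> f) \<le> B * (LINT s:{-1..0::real}|lborel. cmod (f s))"
proof -
  have "cmod (Jint \<phi> f) \<le> (LINT s:{-1..0::real}|lborel. cmod (\<phi> s * f s))"
    unfolding Jint_def by (rule set_integral_norm_bound[OF J_int[OF f \<phi>]])
  also have "\<dots> \<le> (LINT s:{-1..0::real}|lborel. B * cmod (f s))"
  proof (rule set_integral_mono)
    show "set_integrable lborel {-1..0} (\<lambda>s. cmod (\<phi> s * f s))"
      by (rule set_integrable_norm[OF J_int[OF f \<phi>]])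
    show "set_integrable lborel {-1..0} (\<lambda>s. B * cmod (f s))"
      using set_integrable_norm[OF f(1)] by (intro set_integrable_mult_right) auto
    show "cmod (\<phi> s * f s) \<le> B * cmod (f s)" if "s \<in> {-1..0}" for s
      using B[OF that] by (simp add: norm_mult mult_right_mono)
  qed
  also have "\<dots> = B * (LINT s:{-1..0::real}|lborel. cmod (f s))" by simp
  finally show ?thesis .
qed

lemma J_add:
  assumes f: "set_integrable lborel {-1..0::real} f" "f \<in> borel_measurable borel"
    and "continuous_on UNIV \<phi>" "continuous_on UNIV \<psi>"
  shows "Jint (\<lambda>s. \<phi> s + \<psi> s) f = Jint \<phi> f + Jint \<psi> f"
  unfolding Jint_def distrib_right
  by (rule set_integral_add(2)) (intro J_int assms)+

lemma J_diff:
  assumes f: "set_integrable lborel {-1..0::real} f" "f \<in> borel_measurable borel"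
    and "continuous_on UNIV \<phi>" "continuous_on UNIV \<psi>"
  shows "Jint (\<lambda>s. \<phi> s - \<psi> s) f = Jint \<phi> f - Jint \<psi> f"
  unfolding Jint_def left_diff_distrib
  by (rule set_integral_diff(2)) (intro J_int assms)+

lemma J_cmult: "Jint (\<lambda>s. a * \<phi> s) f = a * Jint \<phi> f"
  unfolding Jint_def by (simp add: mult.assoc)

lemma J_sum:
  assumes f: "set_integrable lborel {-1..0::real} f" "f \<in> borel_measurable borel"
    and "finite K" "\<And>k. k \<in> K \<Longrightarrow> continuous_on UNIV (\<phi> k)"
  shows "Jint (\<lambda>s. \<Sum>k\<in>K. \<phi> k s) f = (\<Sum>k\<in>K. Jint (\<phi> k) f)"
  using assms(3,4)
proof (induction K rule: finite_induct)
  case empty then show ?case by (simp add: Jint_def)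
next
  case (insert k K)
  have "Jint (\<lambda>s. \<Sum>k\<in>insert k K. \<phi> k s) f = Jint (\<lambda>s. \<phi> k s + (\<Sum>k\<in>K. \<phi> k s)) f"
    using insert by simp
  also have "\<dots> = Jint (\<phi> k) f + Jint (\<lambda>s. \<Sum>k\<in>K. \<phi> k s) f"
    using insert by (intro J_add f) (auto intro!: continuous_intros)
  finally show ?case using insert by simp
qed

definition IF :: "(real \<Rightarrow> complex) \<Rightarrow> complex \<Rightarrow> complex" where
  "IF f z = (LINT s:{-1..0::real}|lborel. exp (z * of_real s) * f s)"

lemma IF_J: "IF f z = Jint (\<lambda>s. exp (z * of_real s)) f"
  unfolding IF_def Jint_def ..

lemma cont_E: "continuous_on UNIV (\<lambda>s::real. exp ((z::complex) * complex_of_real s))"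
  by (intro continuous_intros)

lemma exp_norm_S:
  assumes "s \<in> {-1..0::real}"
  shows "cmod (exp (z * of_real s)) \<le> exp \<bar>Re z\<bar>"
proof -
  have "Re z * s \<le> \<bar>Re z\<bar>"
  proof -
    have "\<bar>s\<bar> \<le> 1" using assms by auto
    then have "\<bar>Re z\<bar> * \<bar>s\<bar> \<le> \<bar>Re z\<bar> * 1" by (intro mult_left_mono) auto
    moreover have "Re z * s \<le> \<bar>Re z * s\<bar>" by simp
    ultimately show ?thesis by (simp add: abs_mult)
  qed
  then show ?thesis by (simp add: norm_exp_eq_Re)
qed

lemma IF_bound:
  assumes "L2f f"
  shows "cmod (IF f z) \<le> exp \<bar>Re z\<bar> * (LINT s:{-1..0::real}|lborel. cmod (f s))"
  unfolding IF_J using assms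
  by (intro J_bound L2f_int cont_E exp_norm_S) (auto simp: L2f_def)

lemma IF_deriv:
  assumes "L2f f"
  shows "(IF f has_field_derivative IF (\<lambda>s. of_real s * f s) z) (at z)"
proof -
  have fi: "set_integrable lborel {-1..0::real} f" using assms by (rule L2f_int)
  have fm: "f \<in> borel_measurable borel" using assms by (simp add: L2f_def)
  define K where "K = exp \<bar>Re z\<bar> * (LINT s:{-1..0::real}|lborel. cmod (f s))"
  define D where "D h = (IF f (z + h) - IF f z) / h - IF (\<lambda>s. of_real s * f s) z" for h
  have Dbound: "cmod (D h) \<le> K * cmod h" if h: "h \<noteq> 0" "cmod h \<le> 1" for h
  proof -
    have g: "IF (\<lambda>s. of_real s * f s) z = Jint (\<lambda>s. exp (z * of_real s) * of_real s) f"
      unfolding IF_J Jint_def by (simp add: mult_ac)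
    have "D h = inverse h * (Jint (\<lambda>s. exp ((z + h) * of_real s)) f - Jint (\<lambda>s. exp (z * of_real s)) f)
        - Jint (\<lambda>s. exp (z * of_real s) * of_real s) f"
      unfolding D_def g unfolding IF_J by (simp add: divide_inverse mult.commute)
    also have "\<dots> = Jint (\<lambda>s. inverse h * (exp ((z + h) * of_real s) - exp (z * of_real s))
        - exp (z * of_real s) * of_real s) f"
      by (subst J_diff[OF fi fm], (intro continuous_intros)+, subst J_cmult,
          subst J_diff[OF fi fm], (intro continuous_intros)+) simp
    also have "cmod \<dots> \<le> (exp \<bar>Re z\<bar> * cmod h) * (LINT s:{-1..0::real}|lborel. cmod (f s))"
    proof (rule J_bound[OF fi fm])
      show "continuous_on UNIV (\<lambda>s. inverse h * (exp ((z + h) * of_real s) - exp (z * of_real s))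
        - exp (z * of_real s) * of_real s)" by (intro continuous_intros)
      fix s :: real assume s: "s \<in> {-1..0}"
      have hs: "cmod (h * of_real s) \<le> cmod h"
      proof -
        have "\<bar>s\<bar> \<le> 1" using s by auto
        then have "cmod h * \<bar>s\<bar> \<le> cmod h * 1" by (intro mult_left_mono) auto
        then show ?thesis by (simp add: norm_mult)
      qed
      have "inverse h * (exp ((z + h) * of_real s) - exp (z * of_real s)) - exp (z * of_real s) * of_real s
          = exp (z * of_real s) * (inverse h * (exp (h * of_real s) - 1 - h * of_real s))"
        using h by (simp add: distrib_right exp_add field_simps)
      also have "cmod \<dots> \<le> exp \<bar>Re z\<bar> * cmod h"
      proof -
        have "cmod (exp (h * of_real s) - 1 - h * of_real s) \<le> (cmod (h * of_real s))^2"
          using hs h by (intro exp_sub_bound) auto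
        also have "\<dots> \<le> (cmod h)^2" using hs by (intro power_mono) auto
        finally have e2: "cmod (exp (h * of_real s) - 1 - h * of_real s) \<le> (cmod h)^2" .
        have "cmod (inverse h * (exp (h * of_real s) - 1 - h * of_real s)) \<le> cmod h"
        proof -
          have "cmod (inverse h * (exp (h * of_real s) - 1 - h * of_real s))
             = cmod (exp (h * of_real s) - 1 - h * of_real s) / cmod h"
            by (simp add: norm_mult norm_inverse divide_inverse mult.commute)
          also have "\<dots> \<le> (cmod h)^2 / cmod h"
            by (intro divide_right_mono e2) auto
          also have "\<dots> = cmod h" by (simp add: power2_eq_square)
          finally show ?thesis .
        qed
        then show ?thesis
          unfolding norm_mult[of "exp (z * of_real s)"]
          by (intro mult_mono exp_norm_S[OF s]) auto
      qed
      finally show "cmod (inverse h * (exp ((z + h) * of_real s) - exp (z * of_real s))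
        - exp (z * of_real s) * of_real s) \<le> exp \<bar>Re z\<bar> * cmod h" .
    qed
    finally show ?thesis by (simp add: K_def mult_ac)
  qed
  have "(D \<longlongrightarrow> 0) (at 0)"
  proof (rule Lim_null_comparison)
    show "\<forall>\<^sub>F h in at 0. cmod (D h) \<le> K * cmod h"
      unfolding eventually_at by (intro exI[of _ 1]) (auto intro!: Dbound)
    show "((\<lambda>h. K * cmod h) \<longlongrightarrow> 0) (at (0::complex))"
      by (intro tendsto_mult_right_zero tendsto_norm_zero tendsto_ident_at)
  qed
  then have "((\<lambda>h. D h + IF (\<lambda>s. of_real s * f s) z) \<longlongrightarrow> 0 + IF (\<lambda>s. of_real s * f s) z) (at 0)"
    by (intro tendsto_add tendsto_const)
  then show ?thesis unfolding DERIV_def D_def by simp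
qed




definition ek :: "int \<Rightarrow> real \<Rightarrow> complex" where
  "ek k s = exp (\<i> * complex_of_real (2 * pi * real_of_int k * s))"

lemma cont_ek: "continuous_on UNIV (ek k)"
  unfolding ek_def by (intro continuous_intros)

lemma cnj_ek: "cnj (ek k s) = ek (-k) s"
  unfolding ek_def exp_cnj by simp

lemma norm_ek: "cmod (ek k s) = 1"
  unfolding ek_def by (simp only: norm_exp_i_times)

lemma ek_mult: "ek k s * cnj (ek l s) = ek (k - l) s"
  unfolding cnj_ek unfolding ek_def by (simp add: exp_add[symmetric] algebra_simps)

lemma int_ek: "(LINT s:{-1..0::real}|lborel. ek n s) = (if n = 0 then 1 else 0)"
proof (cases "n = 0")
  case True
  then have "(LINT s:{-1..0::real}|lborel. ek n s) = (LINT s:{-1..0::real}|lborel. 1)"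
    by (simp add: ek_def)
  also have "\<dots> = 1" by (subst set_integral_const) auto
  finally show ?thesis using True by simp
next
  case False
  define c where "c = \<i> * complex_of_real (2 * pi * real_of_int n)"
  have c0: "c \<noteq> 0" using False by (simp add: c_def)
  define G where "G w = exp (c * w) / c" for w
  have ekc: "ek n s = exp (c * complex_of_real s)" for s
    unfolding ek_def c_def by (simp add: mult_ac)
  have "(LINT s:{-1..0::real}|lborel. ek n s) = G (complex_of_real 0) - G (complex_of_real (-1))"
    unfolding set_lebesgue_integral_def
  proof (rule integral_FTC_atLeastAtMost[where F="\<lambda>x. G (complex_of_real x)"])
    show "-1 \<le> (0::real)" by simp
    show "continuous_on {-1..0} (ek n)" using cont_ek by (rule continuous_on_subset) auto
    fix x :: real
    have "(G has_field_derivative exp (c * complex_of_real x)) (at (complex_of_real x))"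
      unfolding G_def using c0 by (auto intro!: derivative_eq_intros)
    then show "((\<lambda>x. G (complex_of_real x)) has_vector_derivative ek n x) (at x within {-1..0})"
      unfolding ekc by (rule has_vector_derivative_real_field)
  qed
  also have "\<dots> = 0"
  proof -
    have "exp (- c) = exp (\<i> * (of_int (-n) * (of_real pi * 2)))"
      unfolding c_def by (simp add: mult_ac)
    also have "\<dots> = 1" by (rule exp_2pi_1_int)
    finally show ?thesis unfolding G_def by simp
  qed
  finally show ?thesis using False by simp
qed

lemma ortho: "(LINT s:{-1..0::real}|lborel. ek k s * cnj (ek l s)) = (if k = l then 1 else 0)"
  unfolding ek_mult int_ek by simp

lemma set_integrable_Re':
  fixes f :: "real \<Rightarrow> complex"
  assumes "set_integrable lborel A f" shows "set_integrable lborel A (\<lambda>x. Re (f x))"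
proof -
  have "integrable lborel (\<lambda>x. Re (indicator A x *\<^sub>R f x))"
    using assms unfolding set_integrable_def by (rule integrable_Re)
  then show ?thesis unfolding set_integrable_def by simp
qed

lemma set_integral_Re':
  fixes f :: "real \<Rightarrow> complex"
  assumes "set_integrable lborel A f" shows "(LINT x:A|lborel. Re (f x)) = Re (LINT x:A|lborel. f x)"
proof -
  have "integral\<^sup>L lborel (\<lambda>x. Re (indicator A x *\<^sub>R f x)) = Re (integral\<^sup>L lborel (\<lambda>x. indicator A x *\<^sub>R f x))"
    using assms unfolding set_integrable_def by (rule integral_Re)
  then show ?thesis unfolding set_lebesgue_integral_def by simp
qed

definition cc :: "(real \<Rightarrow> complex) \<Rightarrow> int \<Rightarrow> complex" where
  "cc g k = Jint (\<lambda>s. cnj (ek k s)) g"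

lemma norm_diff_sq: "(cmod (a - b))^2 = (cmod a)^2 - 2 * Re (a * cnj b) + (cmod b)^2"
  by (simp only: cmod_power2) (simp add: power2_eq_square algebra_simps)

lemma Re_cnj_mult: "Re (cnj a * a) = (cmod a)^2"
  by (simp only: cmod_power2) (simp add: power2_eq_square)

lemma Re_mult_cnj: "Re (a * cnj a) = (cmod a)^2"
  by (simp only: cmod_power2) (simp add: power2_eq_square)

lemma one_int: "set_integrable lborel {-1..0::real} (\<lambda>_. 1::complex)"
  by (rule borel_integrable_atLeastAtMost') simp

lemma bessel:
  assumes g: "L2f g" and K: "finite K"
  shows "(\<Sum>k\<in>K. (cmod (cc g k))^2) \<le> (LINT s:{-1..0::real}|lborel. (cmod (g s))^2)"
proof -
  have gi: "set_integrable lborel {-1..0::real} g" using g by (rule L2f_int)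
  have gm: "g \<in> borel_measurable borel" using g by (simp add: L2f_def)
  have gg: "set_integrable lborel {-1..0::real} (\<lambda>s. (cmod (g s))^2)" using g by (simp add: L2f_def)
  define h where "h s = (\<Sum>k\<in>K. cc g k * ek k s)" for s
  have hc: "continuous_on UNIV h" unfolding h_def by (intro continuous_intros cont_ek)
  have hcc: "continuous_on UNIV (\<lambda>s. cnj (h s))" using hc by (intro continuous_intros)
  define SS where "SS = (\<Sum>k\<in>K. (cmod (cc g k))^2)"
  define P where "P = Jint (\<lambda>s. cnj (h s)) g"
  have Pint: "set_integrable lborel {-1..0::real} (\<lambda>s. cnj (h s) * g s)"
    by (rule J_int[OF gi gm hcc])
  have P: "P = (\<Sum>k\<in>K. cnj (cc g k) * cc g k)"
  proof -
    have "P = Jint (\<lambda>s. \<Sum>k\<in>K. cnj (cc g k) * cnj (ek k s)) g"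
      unfolding P_def h_def by simp
    also have "\<dots> = (\<Sum>k\<in>K. Jint (\<lambda>s. cnj (cc g k) * cnj (ek k s)) g)"
      by (rule J_sum[OF gi gm K]) (intro continuous_intros cont_ek)
    also have "\<dots> = (\<Sum>k\<in>K. cnj (cc g k) * cc g k)"
      by (simp add: J_cmult cc_def)
    finally show ?thesis .
  qed
  have ReP: "Re P = SS" unfolding P SS_def by (simp only: Re_sum Re_cnj_mult)
  have hhint: "set_integrable lborel {-1..0::real} (\<lambda>s. (cmod (h s))^2)"
    by (rule borel_integrable_atLeastAtMost') (intro continuous_intros continuous_on_subset[OF hc], auto)
  have Q: "(LINT s:{-1..0::real}|lborel. (cmod (h s))^2) = SS"
  proof -
    have "(LINT s:{-1..0::real}|lborel. (cmod (h s))^2) = (LINT s:{-1..0::real}|lborel. Re (h s * cnj (h s) * 1))"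
      by (simp add: complex_norm_square[symmetric] del: of_real_power)
    also have "\<dots> = Re (Jint (\<lambda>s. h s * cnj (h s)) (\<lambda>_. 1))"
      unfolding Jint_def
      by (rule set_integral_Re', rule J_int[OF one_int]) (auto intro!: continuous_intros hc)
    also have "Jint (\<lambda>s. h s * cnj (h s)) (\<lambda>_. 1) =
        Jint (\<lambda>s. \<Sum>k\<in>K. \<Sum>l\<in>K. (cc g k * cnj (cc g l)) * (ek k s * cnj (ek l s))) (\<lambda>_. 1)"
      unfolding h_def by (simp add: sum_distrib_left sum_distrib_right mult_ac) (subst sum.swap, rule refl)
    also have "\<dots> = (\<Sum>k\<in>K. Jint (\<lambda>s. \<Sum>l\<in>K. (cc g k * cnj (cc g l)) * (ek k s * cnj (ek l s))) (\<lambda>_. 1))"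
      by (rule J_sum[OF one_int _ K]) (auto intro!: continuous_intros cont_ek)
    also have "\<dots> = (\<Sum>k\<in>K. \<Sum>l\<in>K. Jint (\<lambda>s. (cc g k * cnj (cc g l)) * (ek k s * cnj (ek l s))) (\<lambda>_. 1))"
      by (intro sum.cong refl J_sum[OF one_int _ K]) (auto intro!: continuous_intros cont_ek)
    also have "\<dots> = (\<Sum>k\<in>K. \<Sum>l\<in>K. (cc g k * cnj (cc g l)) * (if k = l then 1 else 0))"
      unfolding J_cmult by (simp add: Jint_def ortho)
    also have "\<dots> = (\<Sum>k\<in>K. cc g k * cnj (cc g k))"
      using K by (simp add: if_distrib[of "\<lambda>x. _ * x"] cong: if_cong)
    finally show ?thesis unfolding SS_def by (simp only: Re_sum Re_mult_cnj)
  qed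
  have ReP': "(LINT s:{-1..0::real}|lborel. Re (g s * cnj (h s))) = Re P"
    unfolding P_def Jint_def by (subst set_integral_Re'[OF Pint, symmetric]) (simp add: mult.commute)
  have Reint: "set_integrable lborel {-1..0::real} (\<lambda>s. Re (g s * cnj (h s)))"
    using set_integrable_Re'[OF Pint] by (simp add: mult.commute)
  have "0 \<le> (LINT s:{-1..0::real}|lborel. (cmod (g s - h s))^2)"
    unfolding set_lebesgue_integral_def by (intro Bochner_Integration.integral_nonneg_AE AE_I2) simp
  also have "(LINT s:{-1..0::real}|lborel. (cmod (g s - h s))^2) =
      (LINT s:{-1..0::real}|lborel. (cmod (g s))^2 - 2 * Re (g s * cnj (h s)) + (cmod (h s))^2)"
    by (simp add: norm_diff_sq)
  also have "\<dots> = (LINT s:{-1..0::real}|lborel. (cmod (g s))^2) - 2 * (LINT s:{-1..0::real}|lborel. Re (g s * cnj (h s)))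
      + (LINT s:{-1..0::real}|lborel. (cmod (h s))^2)"
  proof -
    have i2: "set_integrable lborel {-1..0::real} (\<lambda>s. 2 * Re (g s * cnj (h s)))"
      using Reint by (rule set_integrable_mult_right)
    have "(LINT s:{-1..0::real}|lborel. (cmod (g s))^2 - 2 * Re (g s * cnj (h s)) + (cmod (h s))^2)
       = (LINT s:{-1..0::real}|lborel. (cmod (g s))^2 - 2 * Re (g s * cnj (h s))) + (LINT s:{-1..0::real}|lborel. (cmod (h s))^2)"
      by (rule set_integral_add(2)[OF set_integral_diff(1)[OF gg i2] hhint])
    also have "(LINT s:{-1..0::real}|lborel. (cmod (g s))^2 - 2 * Re (g s * cnj (h s)))
       = (LINT s:{-1..0::real}|lborel. (cmod (g s))^2) - (LINT s:{-1..0::real}|lborel. 2 * Re (g s * cnj (h s)))"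
      by (rule set_integral_diff(2)[OF gg i2])
    also have "(LINT s:{-1..0::real}|lborel. 2 * Re (g s * cnj (h s))) = 2 * (LINT s:{-1..0::real}|lborel. Re (g s * cnj (h s)))"
      by (rule set_integral_mult_right)
    finally show ?thesis .
  qed
  finally show ?thesis using ReP ReP' Q SS_def by simp
qed

lemma cc_small:
  assumes g: "L2f g" and e: "e > 0"
  shows "finite {k. e \<le> cmod (cc g k)}"
proof (rule ccontr)
  define I where "I = (LINT s:{-1..0::real}|lborel. (cmod (g s))^2)"
  define n where "n = nat \<lceil>I / e^2\<rceil> + 1"
  assume "infinite {k. e \<le> cmod (cc g k)}"
  then obtain B where B: "finite B" "card B = n" "B \<subseteq> {k. e \<le> cmod (cc g k)}"
    using infinite_arbitrarily_large by blast
  have "real n * e^2 = (\<Sum>k\<in>B. e^2)" using B by simp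
  also have "\<dots> \<le> (\<Sum>k\<in>B. (cmod (cc g k))^2)"
    using B e by (intro sum_mono power_mono) auto
  also have "\<dots> \<le> I" unfolding I_def by (rule bessel[OF g B(1)])
  finally have le: "real n * e^2 \<le> I" .
  have "I / e^2 < real n" unfolding n_def by linarith
  then have "I < real n * e^2" using e by (simp add: field_simps)
  with le show False by simp
qed

lemma L2f_mult:
  assumes f: "L2f f" and \<phi>: "continuous_on UNIV \<phi>" and b: "\<And>s. s \<in> {-1..0::real} \<Longrightarrow> cmod (\<phi> s) \<le> 1"
  shows "L2f (\<lambda>s. \<phi> s * f s)"
  unfolding L2f_def
proof
  have [measurable]: "\<phi> \<in> borel_measurable borel" using \<phi> by (rule borel_measurable_continuous_onI)
  have [measurable]: "f \<in> borel_measurable borel" using f by (simp add: L2f_def)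
  show "(\<lambda>s. \<phi> s * f s) \<in> borel_measurable borel" by measurable
  show "set_integrable lborel {-1..0::real} (\<lambda>s. (cmod (\<phi> s * f s))^2)"
  proof (rule set_integrable_bound[where f="\<lambda>s. (cmod (f s))^2"])
    show "set_integrable lborel {-1..0::real} (\<lambda>s. (cmod (f s))^2)" using f by (simp add: L2f_def)
    show "set_borel_measurable lborel {-1..0} (\<lambda>s. (cmod (\<phi> s * f s))^2)"
      unfolding set_borel_measurable_def by measurable
    show "AE x in lborel. x \<in> {-1..0} \<longrightarrow> norm ((cmod (\<phi> x * f x))^2) \<le> norm ((cmod (f x))^2)"
    proof (intro AE_I2 impI)
      fix x :: real assume "x \<in> {-1..0}"
      then have "cmod (\<phi> x * f x) \<le> cmod (f x)"
        using b[of x] by (simp add: norm_mult mult_left_le_one_le)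
      then show "norm ((cmod (\<phi> x * f x))^2) \<le> norm ((cmod (f x))^2)"
        by (simp add: power_mono)
    qed
  qed
qed

lemma RL:
  assumes f: "L2f f" and kk: "filterlim kk cofinite F"
    and w: "((\<lambda>j. z j - \<i> * complex_of_real (\<theta> + 2 * pi * real_of_int (kk j))) \<longlongrightarrow> 0) F"
  shows "((\<lambda>j. IF f (z j)) \<longlongrightarrow> 0) F"
proof -
  have fi: "set_integrable lborel {-1..0::real} f" using f by (rule L2f_int)
  have fm: "f \<in> borel_measurable borel" using f by (simp add: L2f_def)
  define g where "g s = exp (\<i> * complex_of_real (\<theta> * s)) * f s" for s
  have g: "L2f g" unfolding g_def
    by (rule L2f_mult[OF f]) (auto intro!: continuous_intros simp only: norm_exp_i_times)
  define W where "W j = z j - \<i> * complex_of_real (\<theta> + 2 * pi * real_of_int (kk j))" for j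
  define E where "E j s = exp (\<i> * complex_of_real ((\<theta> + 2 * pi * real_of_int (kk j)) * s))" for j s
  have contE: "continuous_on UNIV (E j)" for j unfolding E_def by (intro continuous_intros)
  have normE: "cmod (E j s) = 1" for j s unfolding E_def by (simp only: norm_exp_i_times)
  define L1 where "L1 = (LINT s:{-1..0::real}|lborel. cmod (f s))"
  have split: "IF f (z j) = cc g (- kk j) + Jint (\<lambda>s. (exp (W j * complex_of_real s) - 1) * E j s) f" for j
  proof -
    have c: "cc g (- kk j) = Jint (E j) f"
    proof -
      have "cnj (ek (- kk j) s) * g s = E j s * f s" for s
      proof -
        have arg: "\<i> * complex_of_real ((\<theta> + 2*pi*real_of_int (kk j)) * s) =
            \<i> * complex_of_real (2*pi*real_of_int (kk j) * s) + \<i> * complex_of_real (\<theta> * s)"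
          by (simp add: algebra_simps)
        have "E j s = ek (kk j) s * exp (\<i> * complex_of_real (\<theta> * s))"
          by (simp only: E_def ek_def arg exp_add)
        then show ?thesis unfolding cnj_ek g_def by (simp add: mult.assoc)
      qed
      then show ?thesis unfolding cc_def Jint_def by simp
    qed
    have "IF f (z j) = Jint (\<lambda>s. exp (W j * complex_of_real s) * E j s) f"
    proof -
      have "exp (z j * complex_of_real s) = exp (W j * complex_of_real s) * E j s" for s
      proof -
        have arg: "z j * complex_of_real s = W j * complex_of_real s +
            \<i> * complex_of_real ((\<theta> + 2*pi*real_of_int (kk j)) * s)"
          by (simp add: W_def algebra_simps)
        show ?thesis by (simp only: E_def arg exp_add)
      qed
      then show ?thesis unfolding IF_J by simp
    qed
    also have "\<dots> = Jint (E j) f + Jint (\<lambda>s. (exp (W j * complex_of_real s) - 1) * E j s) f"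
    proof -
      have "Jint (\<lambda>s. exp (W j * complex_of_real s) * E j s) f
          = Jint (\<lambda>s. E j s + (exp (W j * complex_of_real s) - 1) * E j s) f"
        by (simp add: algebra_simps)
      also have "\<dots> = Jint (E j) f + Jint (\<lambda>s. (exp (W j * complex_of_real s) - 1) * E j s) f"
        by (rule J_add[OF fi fm contE]) (intro continuous_intros contE)
      finally show ?thesis .
    qed
    finally show ?thesis unfolding c .
  qed
  have A: "((\<lambda>j. cc g (- kk j)) \<longlongrightarrow> 0) F"
  proof (rule tendstoI)
    fix e :: real assume e: "e > 0"
    have fin: "finite {k. e \<le> cmod (cc g k)}" by (rule cc_small[OF g e])
    have "{k. \<not> cmod (cc g (- k)) < e} \<subseteq> uminus ` {k. e \<le> cmod (cc g k)}"
    proof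
      fix k assume "k \<in> {k. \<not> cmod (cc g (- k)) < e}"
      then show "k \<in> uminus ` {k. e \<le> cmod (cc g k)}"
        by (intro image_eqI[of _ _ "- k"]) auto
    qed
    then have "finite {k. \<not> cmod (cc g (- k)) < e}" using fin by (rule finite_subset[OF _ finite_imageI])
    then have "eventually (\<lambda>k. cmod (cc g (- k)) < e) cofinite" by (simp add: eventually_cofinite)
    then have "eventually (\<lambda>j. cmod (cc g (- kk j)) < e) F" using kk by (rule eventually_compose_filterlim)
    then show "eventually (\<lambda>j. dist (cc g (- kk j)) 0 < e) F" by simp
  qed
  have B: "((\<lambda>j. Jint (\<lambda>s. (exp (W j * complex_of_real s) - 1) * E j s) f) \<longlongrightarrow> 0) F"
  proof (rule Lim_null_comparison)
    have W0: "(W \<longlongrightarrow> 0) F" using w unfolding W_def .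
    show "((\<lambda>j. 2 * cmod (W j) * L1) \<longlongrightarrow> 0) F"
      using tendsto_mult_left_zero[OF tendsto_mult_right_zero[OF tendsto_norm_zero[OF W0]], of 2 L1] by simp
    have "eventually (\<lambda>j. cmod (W j) < 1) F" using W0 by (auto dest: tendstoD[of _ _ _ 1])
    then show "eventually (\<lambda>j. cmod (Jint (\<lambda>s. (exp (W j * complex_of_real s) - 1) * E j s) f)
        \<le> 2 * cmod (W j) * L1) F"
    proof eventually_elim
      case (elim j)
      show ?case unfolding L1_def
      proof (rule J_bound[OF fi fm])
        show "continuous_on UNIV (\<lambda>s. (exp (W j * complex_of_real s) - 1) * E j s)"
          by (intro continuous_intros contE)
        fix s :: real assume s: "s \<in> {-1..0}"
        have ws: "cmod (W j * complex_of_real s) \<le> cmod (W j)"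
        proof -
          have "\<bar>s\<bar> \<le> 1" using s by auto
          then have "cmod (W j) * \<bar>s\<bar> \<le> cmod (W j) * 1" by (intro mult_left_mono) auto
          then show ?thesis by (simp add: norm_mult)
        qed
        have "cmod (exp (W j * complex_of_real s) - 1)
            \<le> cmod (exp (W j * complex_of_real s) - 1 - W j * complex_of_real s) + cmod (W j * complex_of_real s)"
          by (rule order.trans[OF _ norm_triangle_ineq]) simp
        also have "\<dots> \<le> (cmod (W j * complex_of_real s))^2 + cmod (W j * complex_of_real s)"
          using ws elim by (intro add_mono exp_sub_bound) auto
        also have "\<dots> \<le> cmod (W j) + cmod (W j)"
        proof -
          have "(cmod (W j * complex_of_real s))^2 \<le> cmod (W j * complex_of_real s) * 1"
            unfolding power2_eq_square using ws elim by (intro mult_left_mono) auto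
          then show ?thesis using ws by linarith
        qed
        finally show "cmod ((exp (W j * complex_of_real s) - 1) * E j s) \<le> 2 * cmod (W j)"
          by (simp add: norm_mult normE)
      qed
    qed
  qed
  show ?thesis using tendsto_add[OF A B] unfolding split[symmetric] by simp
qed




definition L2ok :: "(real \<Rightarrow> complex) \<Rightarrow> bool" where
  "L2ok f \<longleftrightarrow> (\<exists>f0. L2f f0 \<and> (\<forall>s\<in>{-1..0::real}. f s = f0 s))"

lemma IF_cong: "(\<forall>s\<in>{-1..0::real}. f s = g s) \<Longrightarrow> IF f z = IF g z"
  unfolding IF_def by (rule set_lebesgue_integral_cong) auto

lemma L2ok_RL:
  assumes f: "L2ok f" and kk: "filterlim kk cofinite F"
    and w: "((\<lambda>j. z j - \<i> * complex_of_real (\<theta> + 2 * pi * real_of_int (kk j))) \<longlongrightarrow> 0) F"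
  shows "((\<lambda>j. IF f (z j)) \<longlongrightarrow> 0) F"
proof -
  obtain f0 where f0: "L2f f0" "\<forall>s\<in>{-1..0::real}. f s = f0 s" using f unfolding L2ok_def by blast
  have "IF f (z j) = IF f0 (z j)" for j using f0(2) by (rule IF_cong)
  then show ?thesis using RL[OF f0(1) kk w] by simp
qed

lemma L2ok_deriv:
  assumes f: "L2ok f"
  shows "(IF f has_field_derivative IF (\<lambda>s. of_real s * f s) z) (at z)"
proof -
  obtain f0 where f0: "L2f f0" "\<forall>s\<in>{-1..0::real}. f s = f0 s" using f unfolding L2ok_def by blast
  have e1: "IF f = IF f0" using f0(2) by (intro ext IF_cong)
  have e2: "IF (\<lambda>s. of_real s * f s) z = IF (\<lambda>s. of_real s * f0 s) z" using f0(2) by (intro IF_cong) auto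
  show ?thesis unfolding e1 e2 by (rule IF_deriv[OF f0(1)])
qed

lemma L2ok_smult:
  assumes f: "L2ok f" shows "L2ok (\<lambda>s. complex_of_real s * f s)"
proof -
  obtain f0 where f0: "L2f f0" "\<forall>s\<in>{-1..0::real}. f s = f0 s" using f unfolding L2ok_def by blast
  have "L2f (\<lambda>s. complex_of_real s * f0 s)"
    by (rule L2f_mult[OF f0(1)]) (auto intro!: continuous_intros)
  then show ?thesis unfolding L2ok_def using f0(2) by (intro exI[of _ "\<lambda>s. complex_of_real s * f0 s"]) auto
qed

lemma L2ok_cnj:
  assumes f: "L2ok f" shows "L2ok (\<lambda>s. cnj (f s))"
proof -
  obtain f0 where f0: "L2f f0" "\<forall>s\<in>{-1..0::real}. f s = f0 s" using f unfolding L2ok_def by blast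
  have [measurable]: "f0 \<in> borel_measurable borel" using f0 by (simp add: L2f_def)
  have "(\<lambda>s. cnj (f0 s)) \<in> borel_measurable borel"
    by (rule measurable_compose[OF _ borel_measurable_continuous_onI]) (auto intro!: continuous_intros)
  then have "L2f (\<lambda>s. cnj (f0 s))" using f0(1) unfolding L2f_def by auto
  then show ?thesis unfolding L2ok_def using f0(2) by (intro exI[of _ "\<lambda>s. cnj (f0 s)"]) auto
qed

lemma L2_mat_ok:
  assumes "L2_mat A" shows "L2ok (\<lambda>s. A s $ i $ j)"
proof -
  define f0 where "f0 s = indicator {-1..0::real} s *\<^sub>R A s $ i $ j" for s
  have m: "f0 \<in> borel_measurable borel"
    using assms unfolding L2_mat_def set_borel_measurable_def f0_def by simp
  have "set_integrable lborel {-1..0::real} (\<lambda>s. (cmod (f0 s))^2)"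
  proof -
    have "set_integrable lborel {-1..0::real} (\<lambda>s. (cmod (A s $ i $ j))^2)"
      using assms unfolding L2_mat_def by simp
    then show ?thesis by (rule set_integrable_cong[THEN iffD1, rotated -1]) (auto simp: f0_def)
  qed
  with m have "L2f f0" unfolding L2f_def by simp
  then show ?thesis unfolding L2ok_def by (intro exI[of _ f0]) (auto simp: f0_def)
qed

lemma Delta_entry:
  "Delta A A2 A3 z $ i $ j = - z * (if i = j then 1 else 0) + z * exp (- z) * A $ i $ j
     + z * IF (\<lambda>s. A2 s $ i $ j) z + IF (\<lambda>s. A3 s $ i $ j) z"
  unfolding Delta_def IF_def by simp

definition Dd :: "complex^'n^'n \<Rightarrow> (real \<Rightarrow> complex^'n^'n) \<Rightarrow> (real \<Rightarrow> complex^'n^'n)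
    \<Rightarrow> complex \<Rightarrow> 'n \<Rightarrow> 'n \<Rightarrow> complex" where
  "Dd A A2 A3 z i j = - (if i = j then 1 else 0) + exp (- z) * A $ i $ j - z * exp (- z) * A $ i $ j
     + IF (\<lambda>s. A2 s $ i $ j) z + z * IF (\<lambda>s. of_real s * A2 s $ i $ j) z
     + IF (\<lambda>s. of_real s * A3 s $ i $ j) z"

lemma DeltaD_entry:
  assumes "L2_mat A2" "L2_mat A3"
  shows "DeltaD A A2 A3 z $ i $ j = Dd A A2 A3 z i j"
proof -
  have d2: "(IF (\<lambda>s. A2 s $ i $ j) has_field_derivative IF (\<lambda>s. of_real s * A2 s $ i $ j) z) (at z)"
    by (rule L2ok_deriv[OF L2_mat_ok[OF assms(1)]])
  have d3: "(IF (\<lambda>s. A3 s $ i $ j) has_field_derivative IF (\<lambda>s. of_real s * A3 s $ i $ j) z) (at z)"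
    by (rule L2ok_deriv[OF L2_mat_ok[OF assms(2)]])
  have "((\<lambda>w. Delta A A2 A3 w $ i $ j) has_field_derivative Dd A A2 A3 z i j) (at z)"
    unfolding Delta_entry Dd_def
    by (rule derivative_eq_intros d2 d3 refl | simp)+ (simp add: algebra_simps)
  then show ?thesis unfolding DeltaD_def by (simp add: DERIV_imp_deriv)
qed




lemma cofinite_big:
  assumes kk: "filterlim (kk :: nat \<Rightarrow> int) cofinite F"
  shows "eventually (\<lambda>j. B \<le> \<bar>real_of_int (kk j)\<bar>) F"
proof -
  have "finite {k::int. \<not> B \<le> \<bar>real_of_int k\<bar>}"
  proof (rule finite_subset[of _ "{-\<lceil>B\<rceil>..\<lceil>B\<rceil>}"])
    show "{k::int. \<not> B \<le> \<bar>real_of_int k\<bar>} \<subseteq> {-\<lceil>B\<rceil>..\<lceil>B\<rceil>}"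
    proof
      fix k :: int assume "k \<in> {k::int. \<not> B \<le> \<bar>real_of_int k\<bar>}"
      then have "\<bar>real_of_int k\<bar> < B" by simp
      then have "real_of_int \<bar>k\<bar> < B" by simp
      moreover have "B \<le> real_of_int \<lceil>B\<rceil>" by (rule le_of_int_ceiling)
      ultimately have "real_of_int \<bar>k\<bar> < real_of_int \<lceil>B\<rceil>" by linarith
      then have "\<bar>k\<bar> \<le> \<lceil>B\<rceil>" by (simp only: of_int_less_iff)
      then show "k \<in> {-\<lceil>B\<rceil>..\<lceil>B\<rceil>}" by auto
    qed
  qed simp
  then have "eventually (\<lambda>k::int. B \<le> \<bar>real_of_int k\<bar>) cofinite" by (simp add: eventually_cofinite)
  then show ?thesis using kk by (rule eventually_compose_filterlim)
qed

lemma z_big: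
  assumes kk: "filterlim (kk :: nat \<Rightarrow> int) cofinite F"
    and w: "((\<lambda>j. z j - \<i> * complex_of_real (\<theta> + 2 * pi * real_of_int (kk j))) \<longlongrightarrow> 0) F"
  shows "eventually (\<lambda>j. M \<le> cmod (z j)) F"
proof -
  have e1: "eventually (\<lambda>j. cmod (z j - \<i> * complex_of_real (\<theta> + 2 * pi * real_of_int (kk j))) < 1) F"
    using tendstoD[OF w, of 1] by simp
  have e2: "eventually (\<lambda>j. (M + 1 + \<bar>\<theta>\<bar>) / (2 * pi) \<le> \<bar>real_of_int (kk j)\<bar>) F"
    by (rule cofinite_big[OF kk])
  show ?thesis using e1 e2
  proof eventually_elim
    case (elim j)
    define k where "k = real_of_int (kk j)"
    have "(M + 1 + \<bar>\<theta>\<bar>) / (2 * pi) * (2 * pi) \<le> \<bar>k\<bar> * (2 * pi)"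
      using elim(2) unfolding k_def by (rule mult_right_mono) simp
    then have b1: "M + 1 + \<bar>\<theta>\<bar> \<le> \<bar>k\<bar> * (2 * pi)" by simp
    have b2: "\<bar>2 * pi * k\<bar> = \<bar>k\<bar> * (2 * pi)" by (simp add: abs_mult)
    have b3: "\<bar>2 * pi * k\<bar> \<le> \<bar>\<theta> + 2 * pi * k\<bar> + \<bar>\<theta>\<bar>" by arith
    from b1 b2 b3 have a: "M + 1 \<le> \<bar>\<theta> + 2 * pi * k\<bar>" by linarith
    define q where "q = \<i> * complex_of_real (\<theta> + 2 * pi * k)"
    have nq: "cmod q = \<bar>\<theta> + 2 * pi * k\<bar>" unfolding q_def by (simp only: norm_mult norm_ii norm_of_real mult_1_left)
    have "cmod q \<le> cmod (z j) + cmod (z j - q)"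
      by (rule order.trans[OF _ norm_triangle_ineq4]) simp
    moreover have "cmod (z j - q) < 1" using elim(1) unfolding q_def k_def .
    ultimately have "\<bar>\<theta> + 2 * pi * k\<bar> \<le> cmod (z j) + 1" unfolding nq by linarith
    with a show ?case by simp
  qed
qed

lemma inv_z:
  assumes kk: "filterlim (kk :: nat \<Rightarrow> int) cofinite F"
    and w: "((\<lambda>j. z j - \<i> * complex_of_real (\<theta> + 2 * pi * real_of_int (kk j))) \<longlongrightarrow> 0) F"
  shows "((\<lambda>j. 1 / z j) \<longlongrightarrow> 0) F"
proof (rule tendstoI)
  fix e :: real assume e: "e > 0"
  show "eventually (\<lambda>j. dist (1 / z j) 0 < e) F"
    using z_big[OF kk w, of "2 / e"]
  proof eventually_elim
    case (elim j)
    have pos: "0 < 2 / e" using e by simp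
    then have zpos: "cmod (z j) > 0" using elim by linarith
    have "cmod (1 / z j) = 1 / cmod (z j)" by (simp add: norm_divide)
    also have "\<dots> \<le> 1 / (2 / e)" using elim pos zpos by (intro divide_left_mono) (auto intro: mult_pos_pos)
    also have "\<dots> < e" using e by simp
    finally show ?case by simp
  qed
qed

lemma exp_z:
  assumes w: "((\<lambda>j. z j - \<i> * complex_of_real (\<theta> + 2 * pi * real_of_int (kk j))) \<longlongrightarrow> 0) F"
  shows "((\<lambda>j. exp (- z j)) \<longlongrightarrow> exp (- (\<i> * complex_of_real \<theta>))) F"
proof -
  define W where "W j = z j - \<i> * complex_of_real (\<theta> + 2 * pi * real_of_int (kk j))" for j
  have eq: "exp (- z j) = exp (- W j) * exp (- (\<i> * complex_of_real \<theta>))" for j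
  proof -
    have "- z j = (- W j + - (\<i> * complex_of_real \<theta>)) + \<i> * (of_int (- kk j) * (of_real pi * 2))"
      unfolding W_def by (simp add: algebra_simps)
    then have "exp (- z j) = exp (- W j + - (\<i> * complex_of_real \<theta>)) * exp (\<i> * (of_int (- kk j) * (of_real pi * 2)))"
      by (simp only: exp_add)
    then show ?thesis by (simp only: exp_2pi_1_int exp_add mult_1_right)
  qed
  have "((\<lambda>j. exp (- W j) * exp (- (\<i> * complex_of_real \<theta>))) \<longlongrightarrow> exp (- 0) * exp (- (\<i> * complex_of_real \<theta>))) F"
    using w unfolding W_def[symmetric] by (intro tendsto_intros)
  then show ?thesis unfolding eq by simp
qed

lemma alg1: "(z::complex) \<noteq> 0 \<Longrightarrow> (- z * d + z * e * a + z * I + J) / z = - d + e * a + I + J * (1 / z)"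
  by (simp add: field_simps)

lemma alg2: "(z::complex) \<noteq> 0 \<Longrightarrow> (- d + e * a - z * e * a + I + z * Is + Js) / z
   = - d * (1 / z) + e * a * (1 / z) - e * a + I * (1 / z) + Is + Js * (1 / z)"
  by (simp add: field_simps)

lemma entry_limits:
  fixes A :: "complex^'n^'n"
  assumes L2: "L2_mat A2" "L2_mat A3" and kk: "filterlim kk cofinite sequentially"
    and w: "((\<lambda>j. z j - \<i> * complex_of_real (\<theta> + 2 * pi * real_of_int (kk j))) \<longlongrightarrow> 0) sequentially"
  shows "((\<lambda>j. Delta A A2 A3 (z j) $ i $ l / z j) \<longlongrightarrow>
            (- (if i = l then 1 else 0) + exp (- (\<i> * complex_of_real \<theta>)) * A$i$l)) sequentially"
    and "((\<lambda>j. Dd A A2 A3 (z j) i l / z j) \<longlongrightarrow> (- exp (- (\<i> * complex_of_real \<theta>)) * A$i$l)) sequentially"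
proof -
  have I2: "((\<lambda>j. IF (\<lambda>s. A2 s $ i $ l) (z j)) \<longlongrightarrow> 0) sequentially"
    by (rule L2ok_RL[OF L2_mat_ok[OF L2(1)] kk w])
  have I3: "((\<lambda>j. IF (\<lambda>s. A3 s $ i $ l) (z j)) \<longlongrightarrow> 0) sequentially"
    by (rule L2ok_RL[OF L2_mat_ok[OF L2(2)] kk w])
  have I2s: "((\<lambda>j. IF (\<lambda>s. of_real s * A2 s $ i $ l) (z j)) \<longlongrightarrow> 0) sequentially"
    by (rule L2ok_RL[OF L2ok_smult[OF L2_mat_ok[OF L2(1)]] kk w])
  have I3s: "((\<lambda>j. IF (\<lambda>s. of_real s * A3 s $ i $ l) (z j)) \<longlongrightarrow> 0) sequentially"
    by (rule L2ok_RL[OF L2ok_smult[OF L2_mat_ok[OF L2(2)]] kk w])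
  have iz: "((\<lambda>j. 1 / z j) \<longlongrightarrow> 0) sequentially" by (rule inv_z[OF kk w])
  have ez: "((\<lambda>j. exp (- z j)) \<longlongrightarrow> exp (- (\<i> * complex_of_real \<theta>))) sequentially" by (rule exp_z[OF w])
  have nz: "eventually (\<lambda>j. z j \<noteq> 0) sequentially"
    using z_big[OF kk w, of 1] by eventually_elim auto
  let ?d = "(if i = l then 1 else 0) :: complex"
  have "((\<lambda>j. - ?d + exp (- z j) * A$i$l + IF (\<lambda>s. A2 s $ i $ l) (z j) + IF (\<lambda>s. A3 s $ i $ l) (z j) * (1 / z j))
      \<longlongrightarrow> - ?d + exp (- (\<i> * complex_of_real \<theta>)) * A$i$l + 0 + 0 * 0) sequentially"
    by (intro tendsto_intros I2 I3 iz ez)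
  moreover have "eventually (\<lambda>j. - ?d + exp (- z j) * A$i$l + IF (\<lambda>s. A2 s $ i $ l) (z j) + IF (\<lambda>s. A3 s $ i $ l) (z j) * (1 / z j)
      = Delta A A2 A3 (z j) $ i $ l / z j) sequentially"
    using nz by eventually_elim (simp only: Delta_entry alg1 not_False_eq_True)
  ultimately show "((\<lambda>j. Delta A A2 A3 (z j) $ i $ l / z j) \<longlongrightarrow>
            (- (if i = l then 1 else 0) + exp (- (\<i> * complex_of_real \<theta>)) * A$i$l)) sequentially"
    by (simp add: tendsto_cong)
  have "((\<lambda>j. - ?d * (1 / z j) + exp (- z j) * A$i$l * (1 / z j) - exp (- z j) * A$i$l
        + IF (\<lambda>s. A2 s $ i $ l) (z j) * (1 / z j) + IF (\<lambda>s. of_real s * A2 s $ i $ l) (z j)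
        + IF (\<lambda>s. of_real s * A3 s $ i $ l) (z j) * (1 / z j))
      \<longlongrightarrow> - ?d * 0 + exp (- (\<i> * complex_of_real \<theta>)) * A$i$l * 0 - exp (- (\<i> * complex_of_real \<theta>)) * A$i$l
        + 0 * 0 + 0 + 0 * 0) sequentially"
    by (intro tendsto_intros I2 I3 I2s I3s iz ez)
  moreover have "eventually (\<lambda>j. - ?d * (1 / z j) + exp (- z j) * A$i$l * (1 / z j) - exp (- z j) * A$i$l
        + IF (\<lambda>s. A2 s $ i $ l) (z j) * (1 / z j) + IF (\<lambda>s. of_real s * A2 s $ i $ l) (z j)
        + IF (\<lambda>s. of_real s * A3 s $ i $ l) (z j) * (1 / z j)
      = Dd A A2 A3 (z j) i l / z j) sequentially"
    using nz by eventually_elim (simp only: Dd_def alg2 not_False_eq_True)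
  ultimately show "((\<lambda>j. Dd A A2 A3 (z j) i l / z j) \<longlongrightarrow> (- exp (- (\<i> * complex_of_real \<theta>)) * A$i$l)) sequentially"
    by (simp add: tendsto_cong)
qed




lemma sphere_subseq:
  fixes xs :: "nat \<Rightarrow> complex^'n"
  assumes "\<forall>j. norm (xs j) = 1"
  obtains r x0 where "strict_mono r" "norm x0 = 1" "(xs \<circ> r) \<longlonglongrightarrow> x0"
proof -
  have "seq_compact (sphere (0::complex^'n) 1)" by (rule compact_imp_seq_compact) simp
  moreover have "\<forall>n. xs n \<in> sphere 0 1" using assms by simp
  ultimately obtain x0 r where "x0 \<in> sphere 0 1" "strict_mono r" "(xs \<circ> r) \<longlonglongrightarrow> x0"
    unfolding seq_compact_def by blast
  then show ?thesis using that by simp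
qed

lemma kernel_limit:
  fixes Mj :: "nat \<Rightarrow> complex^'n^'n"
  assumes k: "\<forall>j. Mj j *v X j = 0" and e: "\<And>i l. ((\<lambda>j. Mj j $ i $ l / Z j) \<longlongrightarrow> B $ i $ l) sequentially"
    and x: "X \<longlonglongrightarrow> x0"
  shows "B *v x0 = 0"
proof -
  have "(B *v x0) $ i = 0" for i
  proof -
    have "((\<lambda>j. \<Sum>l\<in>UNIV. (Mj j $ i $ l / Z j) * X j $ l) \<longlongrightarrow> (\<Sum>l\<in>UNIV. B $ i $ l * x0 $ l)) sequentially"
      by (intro tendsto_sum tendsto_mult e tendsto_vec_nth x)
    moreover have "(\<Sum>l\<in>UNIV. (Mj j $ i $ l / Z j) * X j $ l) = 0" for j
    proof -
      have "(\<Sum>l\<in>UNIV. (Mj j $ i $ l / Z j) * X j $ l) = (Mj j *v X j) $ i / Z j"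
        by (simp add: matrix_vector_mult_def sum_divide_distrib)
      then show ?thesis using k by simp
    qed
    ultimately have "((\<lambda>j. 0::complex) \<longlongrightarrow> (\<Sum>l\<in>UNIV. B $ i $ l * x0 $ l)) sequentially" by simp
    then have "(\<Sum>l\<in>UNIV. B $ i $ l * x0 $ l) = 0" using LIMSEQ_unique tendsto_const by blast
    then show ?thesis by (simp add: matrix_vector_mult_def)
  qed
  then show ?thesis by (simp add: vec_eq_iff)
qed

lemma delta_sum: "(\<Sum>l\<in>UNIV. (if i = l then 1 else 0) * (x::complex^'n) $ l) = x $ i"
proof -
  have "(\<Sum>l\<in>UNIV. (if i = l then 1 else 0) * x $ l) = (\<Sum>l\<in>UNIV. if i = l then x $ l else 0)"
    by (rule sum.cong) auto
  then show ?thesis by simp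
qed

lemma unit_cnj: "cmod \<mu> = 1 \<Longrightarrow> \<mu> * cnj \<mu> = 1"
  by (metis complex_norm_square mult.commute of_real_1 power_one)

lemma exp_Arg:
  assumes "cmod \<mu> = 1"
  shows "exp (\<i> * complex_of_real (Arg \<mu>)) = \<mu>" "exp (- (\<i> * complex_of_real (Arg \<mu>))) = cnj \<mu>"
proof -
  have "\<mu> \<noteq> 0" using assms by auto
  then have "sgn \<mu> = cis (Arg \<mu>)" using Arg_correct by blast
  moreover have "sgn \<mu> = \<mu>" using assms by (simp add: sgn_eq)
  ultimately show e: "exp (\<i> * complex_of_real (Arg \<mu>)) = \<mu>" by (simp add: cis_conv_exp)
  have "exp (- (\<i> * complex_of_real (Arg \<mu>))) = inverse (exp (\<i> * complex_of_real (Arg \<mu>)))"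
    by (rule exp_minus)
  also have "\<dots> = inverse \<mu>" by (simp only: e)
  also have "\<dots> = cnj \<mu>" using unit_cnj[OF assms] by (simp add: inverse_unique)
  finally show "exp (- (\<i> * complex_of_real (Arg \<mu>))) = cnj \<mu>" .
qed

lemma L2_mat_cadj:
  assumes "L2_mat A" shows "L2_mat (\<lambda>s. cadj (A s))"
  unfolding L2_mat_def
proof (intro allI conjI)
  fix i j
  have m: "set_borel_measurable lborel {-1..0} (\<lambda>s. A s $ j $ i)" and
    ii: "set_integrable lborel {-1..0} (\<lambda>s. (cmod (A s $ j $ i))^2)"
    using assms unfolding L2_mat_def by auto
  have "(\<lambda>x. cnj (indicator {-1..0::real} x *\<^sub>R A x $ j $ i)) \<in> borel_measurable lborel"
    using m unfolding set_borel_measurable_def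
    by (rule measurable_compose[OF _ borel_measurable_continuous_onI]) (auto intro!: continuous_intros)
  then show "set_borel_measurable lborel {-1..0} (\<lambda>s. cadj (A s) $ i $ j)"
    unfolding set_borel_measurable_def cadj_def by simp
  show "set_integrable lborel {-1..0} (\<lambda>s. (cmod (cadj (A s) $ i $ j))^2)"
    using ii unfolding cadj_def by simp
qed

lemma uminus_cofinite: "filterlim (\<lambda>j. - kk j) cofinite F" if "filterlim (kk :: nat \<Rightarrow> int) cofinite F"
  unfolding filterlim_iff
proof (intro allI impI)
  fix P :: "int \<Rightarrow> bool" assume "eventually P cofinite"
  then have "finite {x. \<not> P x}" by (simp add: eventually_cofinite)
  then have "finite (uminus ` {x. \<not> P x})" by simp
  moreover have "{x. \<not> P (- x)} = uminus ` {x. \<not> P x}" by (auto simp: image_iff intro!: exI[of _ "- _"])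
  ultimately have "eventually (\<lambda>x. P (- x)) cofinite" by (simp add: eventually_cofinite)
  then show "eventually (\<lambda>x. P (- kk x)) F" using that by (rule eventually_compose_filterlim)
qed




lemma seq_limit:
  fixes A :: "complex^'n^'n" and A2 A3 :: "real \<Rightarrow> complex^'n^'n"
  assumes L2: "L2_mat A2" "L2_mat A3"
    and mu: "cmod \<mu> = 1" "det (mat \<mu> - A) = 0" "order \<mu> (charpoly A) = 1"
    and kk: "filterlim kk cofinite sequentially"
    and lconv: "((\<lambda>j. z j - lam_tilde \<mu> (kk j)) \<longlongrightarrow> 0) sequentially"
    and kerx: "\<forall>j. Delta A A2 A3 (z j) *v xs j = 0"
    and kery: "\<forall>j. DeltaStar A A2 A3 (cnj (z j)) *v ys j = 0"
    and nx: "\<forall>j. norm (xs j) = 1" and ny: "\<forall>j. norm (ys j) = 1"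
  shows "\<exists>r L. strict_mono r \<and> L > 0 \<and>
    ((\<lambda>j. cmod (cinner (DeltaD A A2 A3 (z (r j)) *v xs (r j)) (ys (r j)) / z (r j))) \<longlongrightarrow> L) sequentially"
proof -
  obtain r1 x0 where r1: "strict_mono r1" "norm x0 = 1" "(xs \<circ> r1) \<longlonglongrightarrow> x0"
    using sphere_subseq[OF nx] by blast
  have "\<forall>j. norm ((ys \<circ> r1) j) = 1" using ny by simp
  then obtain r2 y0 where r2: "strict_mono r2" "norm y0 = 1" "(ys \<circ> r1 \<circ> r2) \<longlonglongrightarrow> y0"
    using sphere_subseq by blast
  define r where "r = r1 \<circ> r2"
  have r: "strict_mono r" unfolding r_def using r1(1) r2(1) by (rule strict_mono_o)
  have X: "(\<lambda>j. xs (r j)) \<longlonglongrightarrow> x0"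
    using LIMSEQ_subseq_LIMSEQ[OF r1(3) r2(1)] unfolding r_def by (simp add: comp_def)
  have Y: "(\<lambda>j. ys (r j)) \<longlonglongrightarrow> y0" using r2(3) unfolding r_def by (simp add: comp_def)
  define Z where "Z j = z (r j)" for j
  define K where "K j = kk (r j)" for j
  have K: "filterlim K cofinite sequentially"
    unfolding K_def using filterlim_compose[OF kk filterlim_subseq[OF r]] by (simp add: comp_def)
  have K': "filterlim (\<lambda>j. - K j) cofinite sequentially" by (rule uminus_cofinite[OF K])
  have W: "((\<lambda>j. Z j - \<i> * complex_of_real (Arg \<mu> + 2 * pi * real_of_int (K j))) \<longlongrightarrow> 0) sequentially"
    using filterlim_compose[OF lconv filterlim_subseq[OF r]]
    unfolding Z_def K_def lam_tilde_def by (simp add: comp_def)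
  have W': "((\<lambda>j. cnj (Z j) - \<i> * complex_of_real (- Arg \<mu> + 2 * pi * real_of_int (- K j))) \<longlongrightarrow> 0) sequentially"
  proof -
    have "((\<lambda>j. cnj (Z j - \<i> * complex_of_real (Arg \<mu> + 2 * pi * real_of_int (K j)))) \<longlongrightarrow> cnj 0) sequentially"
      by (intro tendsto_cnj W)
    moreover have "cnj (Z j - \<i> * complex_of_real (Arg \<mu> + 2 * pi * real_of_int (K j)))
       = cnj (Z j) - \<i> * complex_of_real (- Arg \<mu> + 2 * pi * real_of_int (- K j))" for j
      by (simp add: algebra_simps)
    ultimately show ?thesis by simp
  qed
  have eA: "exp (- (\<i> * complex_of_real (Arg \<mu>))) = cnj \<mu>" using exp_Arg[OF mu(1)] by simp
  have eA': "exp (- (\<i> * complex_of_real (- Arg \<mu>))) = \<mu>" using exp_Arg[OF mu(1)] by simp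
  define B1 :: "complex^'n^'n" where "B1 = (\<chi> i l. - (if i = l then 1 else 0) + cnj \<mu> * A$i$l)"
  define B2 :: "complex^'n^'n" where "B2 = (\<chi> i l. - (if i = l then 1 else 0) + \<mu> * cnj (A$l$i))"
  have LD: "((\<lambda>j. Delta A A2 A3 (Z j) $ i $ l / Z j) \<longlongrightarrow> B1 $ i $ l) sequentially" for i l
    using entry_limits(1)[OF L2 K W, of A i l] unfolding eA B1_def by simp
  have LS: "((\<lambda>j. DeltaStar A A2 A3 (cnj (Z j)) $ i $ l / cnj (Z j)) \<longlongrightarrow> B2 $ i $ l) sequentially" for i l
    using entry_limits(1)[OF L2_mat_cadj[OF L2(1)] L2_mat_cadj[OF L2(2)] K' W', of "cadj A" i l]
    unfolding eA' B2_def DeltaStar_def by (simp add: cadj_def)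
  have LDD: "((\<lambda>j. Dd A A2 A3 (Z j) i l / Z j) \<longlongrightarrow> - cnj \<mu> * A$i$l) sequentially" for i l
    using entry_limits(2)[OF L2 K W, of A i l] unfolding eA by simp
  have B1x: "B1 *v x0 = 0"
    by (rule kernel_limit[OF _ LD X]) (use kerx Z_def in simp)
  have B2y: "B2 *v y0 = 0"
    by (rule kernel_limit[OF _ LS Y]) (use kery Z_def in simp)
  have uc: "\<mu> * cnj \<mu> = 1" by (rule unit_cnj[OF mu(1)])
  have Ax: "(A *v x0) $ i = \<mu> * x0 $ i" for i
  proof -
    have "(B1 *v x0) $ i = (\<Sum>l\<in>UNIV. cnj \<mu> * (A$i$l * x0$l) - (if i = l then 1 else 0) * x0$l)"
      by (simp add: B1_def matrix_vector_mult_def algebra_simps)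
    also have "\<dots> = cnj \<mu> * (\<Sum>l\<in>UNIV. A$i$l * x0$l) - x0 $ i"
      by (simp only: sum_subtractf delta_sum sum_distrib_left)
    also have "\<dots> = - x0 $ i + cnj \<mu> * (A *v x0) $ i" by (simp add: matrix_vector_mult_def)
    finally have "(B1 *v x0) $ i = - x0 $ i + cnj \<mu> * (A *v x0) $ i" .
    then have "- x0 $ i + cnj \<mu> * (A *v x0) $ i = 0" using B1x by simp
    then have h: "x0 $ i = cnj \<mu> * (A *v x0) $ i" by (simp add: add_eq_0_iff)
    have "\<mu> * x0 $ i = (\<mu> * cnj \<mu>) * (A *v x0) $ i" by (simp add: h mult.assoc)
    then show ?thesis using uc by simp
  qed
  define w :: "complex^'n" where "w = (\<chi> i. cnj (y0 $ i))"
  have Aw: "(\<Sum>l\<in>UNIV. A $ l $ i * w $ l) = \<mu> * w $ i" for i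
  proof -
    have "(B2 *v y0) $ i = (\<Sum>l\<in>UNIV. \<mu> * (cnj (A $ l $ i) * y0 $ l) - (if i = l then 1 else 0) * y0$l)"
      by (simp add: B2_def matrix_vector_mult_def algebra_simps)
    also have "\<dots> = \<mu> * (\<Sum>l\<in>UNIV. cnj (A $ l $ i) * y0 $ l) - y0 $ i"
      by (simp only: sum_subtractf delta_sum sum_distrib_left)
    finally have "(B2 *v y0) $ i = - y0 $ i + \<mu> * (\<Sum>l\<in>UNIV. cnj (A $ l $ i) * y0 $ l)" by simp
    then have "- y0 $ i + \<mu> * (\<Sum>l\<in>UNIV. cnj (A $ l $ i) * y0 $ l) = 0" using B2y by simp
    then have "cnj (- y0 $ i + \<mu> * (\<Sum>l\<in>UNIV. cnj (A $ l $ i) * y0 $ l)) = 0" by simp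
    then have "- w $ i + cnj \<mu> * (\<Sum>l\<in>UNIV. A $ l $ i * w $ l) = 0" by (simp add: w_def)
    then have h: "w $ i = cnj \<mu> * (\<Sum>l\<in>UNIV. A $ l $ i * w $ l)" by (simp add: add_eq_0_iff)
    have "\<mu> * w $ i = (\<mu> * cnj \<mu>) * (\<Sum>l\<in>UNIV. A $ l $ i * w $ l)" by (simp add: h mult.assoc)
    then show ?thesis using uc by simp
  qed
  have x0nz: "x0 \<noteq> 0" using r1(2) by auto
  have wnz: "w \<noteq> 0"
  proof
    assume "w = 0"
    then have "y0 = 0" by (simp add: w_def vec_eq_iff)
    with r2(2) show False by simp
  qed
  have Mx: "(mat \<mu> - A) *v x0 = 0"
    by (simp add: vec_eq_iff matrix_vector_mult_diff_rdistrib mat_mult_nth Ax)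
  have Mw: "transpose (mat \<mu> - A) *v w = 0"
  proof -
    have "(transpose (mat \<mu> - A) *v w) $ i = \<mu> * w $ i - (\<Sum>l\<in>UNIV. A $ l $ i * w $ l)" for i
    proof -
      have "transpose (mat \<mu> - A) = mat \<mu> - transpose A"
        by (simp add: vec_eq_iff transpose_def mat_def)
      then show ?thesis
        by (simp add: matrix_vector_mult_diff_rdistrib mat_mult_nth) (simp add: vector_matrix_mult_def mult.commute)
    qed
    then show ?thesis by (simp add: vec_eq_iff Aw)
  qed
  define L where "L = cmod (\<Sum>i\<in>UNIV. w $ i * x0 $ i)"
  have Lpos: "L > 0"
    unfolding L_def using left_right_nonorth[OF simple_D[OF mu(2,3)] mu(2) Mx x0nz Mw wnz] by simp
  have val: "cinner (DeltaD A A2 A3 (Z j) *v xs (r j)) (ys (r j)) / Z j =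
     (\<Sum>i\<in>UNIV. \<Sum>l\<in>UNIV. (Dd A A2 A3 (Z j) i l / Z j) * xs (r j) $ l * cnj (ys (r j) $ i))" for j
  proof -
    have "cinner (DeltaD A A2 A3 (Z j) *v xs (r j)) (ys (r j)) / Z j
      = (\<Sum>i\<in>UNIV. (\<Sum>l\<in>UNIV. Dd A A2 A3 (Z j) i l * xs (r j) $ l) * cnj (ys (r j) $ i)) / Z j"
      by (simp add: cinner_def matrix_vector_mult_def DeltaD_entry[OF L2])
    also have "\<dots> = (\<Sum>i\<in>UNIV. \<Sum>l\<in>UNIV. Dd A A2 A3 (Z j) i l * xs (r j) $ l * cnj (ys (r j) $ i) / Z j)"
      by (simp only: sum_divide_distrib sum_distrib_right)
    also have "\<dots> = (\<Sum>i\<in>UNIV. \<Sum>l\<in>UNIV. (Dd A A2 A3 (Z j) i l / Z j) * xs (r j) $ l * cnj (ys (r j) $ i))"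
      by (intro sum.cong refl) (simp add: field_simps)
    finally show ?thesis .
  qed
  have "((\<lambda>j. \<Sum>i\<in>UNIV. \<Sum>l\<in>UNIV. (Dd A A2 A3 (Z j) i l / Z j) * xs (r j) $ l * cnj (ys (r j) $ i))
     \<longlongrightarrow> (\<Sum>i\<in>UNIV. \<Sum>l\<in>UNIV. (- cnj \<mu> * A$i$l) * x0 $ l * cnj (y0 $ i))) sequentially"
    by (intro tendsto_sum tendsto_mult tendsto_cnj LDD tendsto_vec_nth X Y)
  moreover have "(\<Sum>i\<in>UNIV. \<Sum>l\<in>UNIV. (- cnj \<mu> * A$i$l) * x0 $ l * cnj (y0 $ i)) = - (\<Sum>i\<in>UNIV. w $ i * x0 $ i)"
  proof -
    have "(\<Sum>i\<in>UNIV. \<Sum>l\<in>UNIV. (- cnj \<mu> * A$i$l) * x0 $ l * cnj (y0 $ i))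
        = - cnj \<mu> * (\<Sum>i\<in>UNIV. (A *v x0) $ i * w $ i)"
      by (simp add: matrix_vector_mult_def w_def sum_distrib_left sum_distrib_right mult_ac)
    also have "\<dots> = - cnj \<mu> * (\<Sum>i\<in>UNIV. \<mu> * (w $ i * x0 $ i))"
      by (simp add: Ax mult_ac)
    also have "\<dots> = - (\<mu> * cnj \<mu>) * (\<Sum>i\<in>UNIV. w $ i * x0 $ i)"
      by (simp add: sum_distrib_left[symmetric] mult_ac)
    finally show ?thesis using uc by simp
  qed
  ultimately have "((\<lambda>j. cinner (DeltaD A A2 A3 (Z j) *v xs (r j)) (ys (r j)) / Z j)
      \<longlongrightarrow> - (\<Sum>i\<in>UNIV. w $ i * x0 $ i)) sequentially"
    unfolding val by simp
  then have "((\<lambda>j. cmod (cinner (DeltaD A A2 A3 (Z j) *v xs (r j)) (ys (r j)) / Z j)) \<longlongrightarrow> L) sequentially"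
    unfolding L_def using tendsto_norm by fastforce
  then show ?thesis using r Lpos unfolding Z_def by blast
qed




lemma nat_le_cofinite:
  assumes "\<forall>j. int j \<le> \<bar>kk j\<bar>"
  shows "filterlim (kk :: nat \<Rightarrow> int) cofinite sequentially"
  unfolding filterlim_iff
proof (intro allI impI)
  fix P :: "int \<Rightarrow> bool" assume "eventually P cofinite"
  then have fin: "finite {x. \<not> P x}" by (simp add: eventually_cofinite)
  define B where "B = Max (insert 0 (abs ` {x. \<not> P x}))"
  have B: "\<bar>x\<bar> \<le> B" if "\<not> P x" for x
    unfolding B_def using fin that by (intro Max_ge) auto
  show "eventually (\<lambda>x. P (kk x)) sequentially"
    unfolding eventually_sequentially
  proof (intro exI[of _ "nat B + 1"] allI impI)
    fix j assume "nat B + 1 \<le> j"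
    then have "B < int j" by linarith
    moreover have "int j \<le> \<bar>kk j\<bar>" using assms by blast
    ultimately have lt: "B < \<bar>kk j\<bar>" by linarith
    show "P (kk j)"
    proof (rule ccontr)
      assume "\<not> P (kk j)"
      then have "\<bar>kk j\<bar> \<le> B" by (rule B)
      with lt show False by simp
    qed
  qed
qed

lemma extract_seq:
  fixes Am1 :: "complex^'n^'n" and A2 A3 :: "real \<Rightarrow> complex^'n^'n"
    and M :: "nat \<Rightarrow> nat" and K :: "nat \<Rightarrow> int" and X Y :: "nat \<Rightarrow> complex^'n"
    and lam :: "nat \<Rightarrow> int \<Rightarrow> complex" and mu :: "nat \<Rightarrow> complex" and l1 :: nat
  assumes L2: "L2_mat A2" "L2_mat A3"
    and mus: "\<forall>m\<in>{1..l1}. cmod (mu m) = 1 \<and> det (mat (mu m) - Am1) = 0 \<and> order (mu m) (charpoly Am1) = 1"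
    and lam_conv: "\<forall>m\<in>{1..l1}. ((\<lambda>k. lam m k - lam_tilde (mu m) k) \<longlongrightarrow> 0) cofinite"
    and seq: "\<forall>j. M j \<in> {1..l1} \<and> int j \<le> \<bar>K j\<bar> \<and>
        Delta Am1 A2 A3 (lam (M j) (K j)) *v X j = 0 \<and>
        DeltaStar Am1 A2 A3 (cnj (lam (M j) (K j))) *v Y j = 0 \<and> norm (X j) = 1 \<and> norm (Y j) = 1"
  shows "\<exists>r L. strict_mono r \<and> L > 0 \<and>
    ((\<lambda>j. cmod (cinner (DeltaD Am1 A2 A3 (lam (M (r j)) (K (r j))) *v X (r j)) (Y (r j)) / lam (M (r j)) (K (r j))))
      \<longlongrightarrow> L) sequentially"
proof -
  have "M ` UNIV \<subseteq> {1..l1}"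
  proof
    fix x assume "x \<in> M ` UNIV"
    then obtain j where "x = M j" by blast
    then show "x \<in> {1..l1}" using seq[rule_format, of j] by blast
  qed
  then have "finite (M ` UNIV)" by (rule finite_subset) simp
  then have "\<exists>a0\<in>UNIV. infinite {a \<in> UNIV. M a = M a0}"
    by (intro pigeonhole_infinite) simp_all
  then obtain j0 where "infinite {j. M j = M j0}" by auto
  then have "\<exists>r::nat\<Rightarrow>nat. strict_mono r \<and> (\<forall>n. r n \<in> {j. M j = M j0})" by (rule infinite_enumerate)
  then obtain r0 :: "nat \<Rightarrow> nat" where r0: "strict_mono r0" "\<forall>j. r0 j \<in> {j. M j = M j0}"
    by blast
  define m0 where "m0 = M j0"
  have m0: "m0 \<in> {1..l1}" using seq unfolding m0_def by blast
  have Mr: "M (r0 j) = m0" for j using r0(2) unfolding m0_def by auto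
  have kk: "filterlim (\<lambda>j. K (r0 j)) cofinite sequentially"
  proof (rule nat_le_cofinite, intro allI)
    fix j
    have "int j \<le> int (r0 j)" using seq_suble[OF r0(1)] by simp
    also have "\<dots> \<le> \<bar>K (r0 j)\<bar>" using seq by blast
    finally show "int j \<le> \<bar>K (r0 j)\<bar>" .
  qed
  have lc: "((\<lambda>j. lam m0 (K (r0 j)) - lam_tilde (mu m0) (K (r0 j))) \<longlongrightarrow> 0) sequentially"
    using filterlim_compose[OF lam_conv[rule_format, OF m0] kk] by (simp add: comp_def)
  obtain r L where rL: "strict_mono r" "L > 0"
    "((\<lambda>j. cmod (cinner (DeltaD Am1 A2 A3 (lam m0 (K (r0 (r j)))) *v X (r0 (r j))) (Y (r0 (r j))) / lam m0 (K (r0 (r j)))))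
      \<longlongrightarrow> L) sequentially"
  proof -
    have mu0: "cmod (mu m0) = 1" "det (mat (mu m0) - Am1) = 0" "order (mu m0) (charpoly Am1) = 1"
      using mus m0 by blast+
    have kx: "\<forall>j. Delta Am1 A2 A3 (lam m0 (K (r0 j))) *v X (r0 j) = 0"
    proof
      fix j show "Delta Am1 A2 A3 (lam m0 (K (r0 j))) *v X (r0 j) = 0"
        using seq[rule_format, of "r0 j"] unfolding Mr by blast
    qed
    have ky: "\<forall>j. DeltaStar Am1 A2 A3 (cnj (lam m0 (K (r0 j)))) *v Y (r0 j) = 0"
    proof
      fix j show "DeltaStar Am1 A2 A3 (cnj (lam m0 (K (r0 j)))) *v Y (r0 j) = 0"
        using seq[rule_format, of "r0 j"] unfolding Mr by blast
    qed
    have nx: "\<forall>j. norm (X (r0 j)) = 1" using seq by blast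
    have ny: "\<forall>j. norm (Y (r0 j)) = 1" using seq by blast
    show ?thesis using seq_limit[OF L2 mu0 kk lc kx ky nx ny] that by blast
  qed
  show ?thesis
  proof (intro exI[of _ "r0 \<circ> r"] exI[of _ L] conjI)
    show "strict_mono (r0 \<circ> r)" by (rule strict_mono_o[OF r0(1) rL(1)])
    show "L > 0" by (rule rL(2))
    show "((\<lambda>j. cmod (cinner (DeltaD Am1 A2 A3 (lam (M ((r0 \<circ> r) j)) (K ((r0 \<circ> r) j))) *v X ((r0 \<circ> r) j)) (Y ((r0 \<circ> r) j))
       / lam (M ((r0 \<circ> r) j)) (K ((r0 \<circ> r) j)))) \<longlongrightarrow> L) sequentially"
      using rL(3) by (simp add: comp_def Mr)
  qed
qed




theorem lemma6:
  fixes Am1 :: "complex^'n^'n" and A2 A3 :: "real \<Rightarrow> complex^'n^'n"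
    and mu :: "nat \<Rightarrow> complex" and l1 :: nat
    and N1 :: int and r :: "int \<Rightarrow> real" and lam :: "nat \<Rightarrow> int \<Rightarrow> complex"
  assumes L2: "L2_mat A2" "L2_mat A3"
    and enum: "bij_betw mu {1..l1} (sigma1 Am1)"
    and simple: "\<forall>\<mu>\<in>sigma1 Am1. order \<mu> (charpoly Am1) = 1"
    and r_pos: "\<forall>k. r k > 0"
    and r_sum: "(\<lambda>k. (r k)^2) summable_on UNIV"
    and lam_root: "\<forall>m\<in>{1..l1}. \<forall>k. \<bar>k\<bar> \<ge> N1 \<longrightarrow>
        lam m k \<in> ball (lam_tilde (mu m) k) (r k) \<and>
        det (Delta Am1 A2 A3 (lam m k)) = 0 \<and>
        deriv (\<lambda>z. det (Delta Am1 A2 A3 z)) (lam m k) \<noteq> 0 \<and>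
        (\<forall>z\<in>ball (lam_tilde (mu m) k) (r k). det (Delta Am1 A2 A3 z) = 0 \<longrightarrow> z = lam m k)"
    and lam_conv: "\<forall>m\<in>{1..l1}. ((\<lambda>k. lam m k - lam_tilde (mu m) k) \<longlongrightarrow> 0) cofinite"
  shows "\<exists>C1 C2 N. 0 < C1 \<and> C1 < C2 \<and> N \<ge> N1 \<and>
    (\<forall>m\<in>{1..l1}. \<forall>k. \<bar>k\<bar> \<ge> N \<longrightarrow>
      (\<forall>x y. Delta Am1 A2 A3 (lam m k) *v x = 0 \<longrightarrow>
             DeltaStar Am1 A2 A3 (cnj (lam m k)) *v y = 0 \<longrightarrow>
             norm x = 1 \<longrightarrow> norm y = 1 \<longrightarrow>
         C1 \<le> cmod (cinner (DeltaD Am1 A2 A3 (lam m k) *v x) y / lam m k) \<and>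
         cmod (cinner (DeltaD Am1 A2 A3 (lam m k) *v x) y / lam m k) \<le> C2))"
proof -
  define V where "V m k x y = cmod (cinner (DeltaD Am1 A2 A3 (lam m k) *v x) y / lam m k)"
    for m k and x y :: "complex^'n"
  define G where "G m k x y \<longleftrightarrow> m \<in> {1..l1} \<and> Delta Am1 A2 A3 (lam m k) *v x = 0 \<and>
      DeltaStar Am1 A2 A3 (cnj (lam m k)) *v y = 0 \<and> norm x = 1 \<and> norm y = 1"
    for m k and x y :: "complex^'n"
  have mus: "\<forall>m\<in>{1..l1}. cmod (mu m) = 1 \<and> det (mat (mu m) - Am1) = 0 \<and> order (mu m) (charpoly Am1) = 1"
  proof
    fix m assume m: "m \<in> {1..l1}"
    have "mu m \<in> sigma1 Am1" using bij_betw_apply[OF enum m] .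
    then show "cmod (mu m) = 1 \<and> det (mat (mu m) - Am1) = 0 \<and> order (mu m) (charpoly Am1) = 1"
      using simple by (auto simp: sigma1_def)
  qed
  have EX: "\<exists>r L. strict_mono r \<and> L > 0 \<and> ((\<lambda>j. V (M (r j)) (K (r j)) (X (r j)) (Y (r j))) \<longlongrightarrow> L) sequentially"
    if "\<forall>j. G (M j) (K j) (X j) (Y j) \<and> int j \<le> \<bar>K j\<bar>"
    for M :: "nat \<Rightarrow> nat" and K :: "nat \<Rightarrow> int" and X Y :: "nat \<Rightarrow> complex^'n"
    unfolding V_def
    by (rule extract_seq[OF L2 mus lam_conv]) (use that in \<open>auto simp: G_def\<close>)
  have low: "\<exists>c>0. \<exists>N. \<forall>m k x y. G m k x y \<longrightarrow> N \<le> \<bar>k\<bar> \<longrightarrow> c \<le> V m k x y"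
  proof (rule ccontr)
    assume H: "\<not> (\<exists>c>0. \<exists>N. \<forall>m k x y. G m k x y \<longrightarrow> N \<le> \<bar>k\<bar> \<longrightarrow> c \<le> V m k x y)"
    have "\<exists>p. G (fst p) (fst (snd p)) (fst (snd (snd p))) (snd (snd (snd p))) \<and> int j \<le> \<bar>fst (snd p)\<bar>
        \<and> V (fst p) (fst (snd p)) (fst (snd (snd p))) (snd (snd (snd p))) < inverse (real (Suc j))" for j
    proof (rule ccontr)
      assume "\<not> ?thesis"
      then have "\<forall>m k x y. G m k x y \<longrightarrow> int j \<le> \<bar>k\<bar> \<longrightarrow> inverse (real (Suc j)) \<le> V m k x y"
        by (auto simp: not_less)
      then have "\<exists>c>0. \<exists>N. \<forall>m k x y. G m k x y \<longrightarrow> N \<le> \<bar>k\<bar> \<longrightarrow> c \<le> V m k x y"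
        by (intro exI[of _ "inverse (real (Suc j))"] conjI exI[of _ "int j"]) auto
      with H show False by blast
    qed
    then obtain f where f: "\<forall>j. G (fst (f j)) (fst (snd (f j))) (fst (snd (snd (f j)))) (snd (snd (snd (f j))))
        \<and> int j \<le> \<bar>fst (snd (f j))\<bar>
        \<and> V (fst (f j)) (fst (snd (f j))) (fst (snd (snd (f j)))) (snd (snd (snd (f j)))) < inverse (real (Suc j))"
      by metis
    obtain r L where rL: "strict_mono r" "L > 0"
      "((\<lambda>j. V (fst (f (r j))) (fst (snd (f (r j)))) (fst (snd (snd (f (r j))))) (snd (snd (snd (f (r j)))))) \<longlongrightarrow> L) sequentially"
      using EX[of "\<lambda>j. fst (f j)" "\<lambda>j. fst (snd (f j))" "\<lambda>j. fst (snd (snd (f j)))" "\<lambda>j. snd (snd (snd (f j)))"] f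
      by blast
    have "V (fst (f (r j))) (fst (snd (f (r j)))) (fst (snd (snd (f (r j))))) (snd (snd (snd (f (r j)))))
        \<le> inverse (real (Suc j))" for j
    proof -
      have "j \<le> r j" using seq_suble[OF rL(1)] .
      then have "inverse (real (Suc (r j))) \<le> inverse (real (Suc j))" by (simp add: field_simps)
      moreover have "V (fst (f (r j))) (fst (snd (f (r j)))) (fst (snd (snd (f (r j))))) (snd (snd (snd (f (r j)))))
        < inverse (real (Suc (r j)))" using f by blast
      ultimately show ?thesis by linarith
    qed
    then have "L \<le> 0" using LIMSEQ_le[OF rL(3) LIMSEQ_inverse_real_of_nat] by blast
    with rL(2) show False by simp
  qed
  have up: "\<exists>C. \<exists>N. \<forall>m k x y. G m k x y \<longrightarrow> N \<le> \<bar>k\<bar> \<longrightarrow> V m k x y \<le> C"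
  proof (rule ccontr)
    assume H: "\<not> (\<exists>C. \<exists>N. \<forall>m k x y. G m k x y \<longrightarrow> N \<le> \<bar>k\<bar> \<longrightarrow> V m k x y \<le> C)"
    have "\<exists>p. G (fst p) (fst (snd p)) (fst (snd (snd p))) (snd (snd (snd p))) \<and> int j \<le> \<bar>fst (snd p)\<bar>
        \<and> real j < V (fst p) (fst (snd p)) (fst (snd (snd p))) (snd (snd (snd p)))" for j
    proof (rule ccontr)
      assume "\<not> ?thesis"
      then have "\<forall>m k x y. G m k x y \<longrightarrow> int j \<le> \<bar>k\<bar> \<longrightarrow> V m k x y \<le> real j"
        by (auto simp: not_less)
      then have "\<exists>C. \<exists>N. \<forall>m k x y. G m k x y \<longrightarrow> N \<le> \<bar>k\<bar> \<longrightarrow> V m k x y \<le> C"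
        by (intro exI[of _ "real j"] exI[of _ "int j"]) auto
      with H show False by blast
    qed
    then obtain f where f: "\<forall>j. G (fst (f j)) (fst (snd (f j))) (fst (snd (snd (f j)))) (snd (snd (snd (f j))))
        \<and> int j \<le> \<bar>fst (snd (f j))\<bar>
        \<and> real j < V (fst (f j)) (fst (snd (f j))) (fst (snd (snd (f j)))) (snd (snd (snd (f j))))"
      by metis
    obtain r L where rL: "strict_mono r" "L > 0"
      "((\<lambda>j. V (fst (f (r j))) (fst (snd (f (r j)))) (fst (snd (snd (f (r j))))) (snd (snd (snd (f (r j)))))) \<longlongrightarrow> L) sequentially"
      using EX[of "\<lambda>j. fst (f j)" "\<lambda>j. fst (snd (f j))" "\<lambda>j. fst (snd (snd (f j)))" "\<lambda>j. snd (snd (snd (f j)))"] f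
      by blast
    have e1: "eventually (\<lambda>j. dist (V (fst (f (r j))) (fst (snd (f (r j)))) (fst (snd (snd (f (r j))))) (snd (snd (snd (f (r j)))))) L < 1) sequentially"
      using tendstoD[OF rL(3), of 1] by simp
    have e2: "eventually (\<lambda>j. L + 1 \<le> real j) sequentially"
      unfolding eventually_sequentially by (intro exI[of _ "nat \<lceil>L + 1\<rceil>"]) (auto, linarith)
    from e1 e2 have "eventually (\<lambda>j. False) sequentially"
    proof eventually_elim
      case (elim j)
      have "real j \<le> real (r j)" using seq_suble[OF rL(1)] by simp
      moreover have "real (r j) < V (fst (f (r j))) (fst (snd (f (r j)))) (fst (snd (snd (f (r j))))) (snd (snd (snd (f (r j)))))"
        using f by blast
      ultimately show False using elim by (simp add: dist_real_def abs_less_iff)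
    qed
    then show False by simp
  qed
  obtain c Nl where c: "c > 0" "\<forall>m k x y. G m k x y \<longrightarrow> Nl \<le> \<bar>k\<bar> \<longrightarrow> c \<le> V m k x y" using low by blast
  obtain C Nu where C: "\<forall>m k x y. G m k x y \<longrightarrow> Nu \<le> \<bar>k\<bar> \<longrightarrow> V m k x y \<le> C" using up by blast
  have main: "\<forall>m\<in>{1..l1}. \<forall>k. \<bar>k\<bar> \<ge> max N1 (max Nl Nu) \<longrightarrow>
      (\<forall>x y. Delta Am1 A2 A3 (lam m k) *v x = 0 \<longrightarrow>
             DeltaStar Am1 A2 A3 (cnj (lam m k)) *v y = 0 \<longrightarrow>
             norm x = 1 \<longrightarrow> norm y = 1 \<longrightarrow>
         c \<le> cmod (cinner (DeltaD Am1 A2 A3 (lam m k) *v x) y / lam m k) \<and>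
         cmod (cinner (DeltaD Am1 A2 A3 (lam m k) *v x) y / lam m k) \<le> max C (c + 1))"
  proof (intro ballI allI impI conjI)
    fix m k x y
    assume m: "m \<in> {1..l1}" and k: "max N1 (max Nl Nu) \<le> \<bar>k\<bar>"
      and hx: "Delta Am1 A2 A3 (lam m k) *v x = 0" and hy: "DeltaStar Am1 A2 A3 (cnj (lam m k)) *v y = 0"
      and nx: "norm x = 1" and ny: "norm y = 1"
    have g: "G m k x y" unfolding G_def using m hx hy nx ny by blast
    show "c \<le> cmod (cinner (DeltaD Am1 A2 A3 (lam m k) *v x) y / lam m k)"
      using c(2) g k unfolding V_def by auto
    have "V m k x y \<le> C" using C g k by auto
    then show "cmod (cinner (DeltaD Am1 A2 A3 (lam m k) *v x) y / lam m k) \<le> max C (c + 1)"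
      unfolding V_def by linarith
  qed
  have "0 < c" "c < max C (c + 1)" "max N1 (max Nl Nu) \<ge> N1" using c(1) by auto
  then show ?thesis using main by blast
qed


end
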